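(* Let $m\in\mathbb{N}$, let $\Delta\subseteq 2^{[m]}$ be a simplicial complex with facets $F_1,\dots,F_s$, and let $T\subseteq[m]$ be an independent set of $\Delta$, i.e. $|T\cap F_k|\le1$ for all $k\in[s]$. Fix $r_j\in\mathbb{N}$ for $j\in[m]\setminus T$. Put $R_i=\mathbb{N}$ for $i\in T$ and $R_j=[r_j]$ for $j\in[m]\setminus T$, $\mathcal{R}=\prod_{i=1}^mR_i$ and $\mathcal{R}_{F_k}=\prod_{j\in F_k}R_j$; for $\mathbf{i}=(i_1,\dots,i_m)\in\mathcal{R}$ write $\mathbf{i}_{F_k}=(i_j)_{j\in F_k}$. Let $\mu_{\Delta,T}:\mathbb{Z}^{(\mathcal{R})}\to\bigoplus_{k=1}^s\mathbb{Z}^{(\mathcal{R}_{F_k})}$ be the group homomorphism with $\mu_{\Delta,T}(\mathbf{e}_{\mathbf{i}})=(\mathbf{e}_{\mathbf{i}_{F_1}},\dots,\mathbf{e}_{\mathbf{i}_{F_s}})$. Then the lattice $\ker\mu_{\Delta,T}\subseteq\mathbb{Z}^{(\mathcal{R})}$ has a finite equivariant Markov basis.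
   Context: $\mathbb{N}=\{1,2,\dots\}$, $[r]=\{1,\dots,r\}$. For a set $J$, $\mathbb{Z}^{(J)}$ is the free abelian group with basis $J$ (finitely supported integer vectors, standard basis $\mathbf{e}_j$), and $\mathbb{Z}_{\ge0}^{(J)}$ its nonnegative vectors. $\mathrm{Sym}$ is the group of permutations of $\mathbb{N}$ fixing all but finitely many elements; it acts on $\mathbb{Z}^{(\mathcal{R})}$ by the linear extension of $\sigma(\mathbf{e}_{\mathbf{i}})=\mathbf{e}_{\mathbf{i}'}$, where $i'_t=\sigma(i_t)$ for $t\in T$ and $i'_t=i_t$ for $t\notin T$. For a lattice (subgroup) $L\subseteq\mathbb{Z}^{(J)}$ and $\mathbf{u}\in\mathbb{Z}_{\ge0}^{(J)}$, the fiber is $F_L(\mathbf{u})=\{\mathbf{v}\in\mathbb{Z}_{\ge0}^{(J)}\mid\mathbf{u}-\mathbf{v}\in L\}$. A subset $\mathcal{B}\subseteq L$ is a Markov basis of $L$ if for every $\mathbf{u}\in\mathbb{Z}_{\ge0}^{(J)}$ the graph with vertex set $F_L(\mathbf{u})$ and an edge between $\mathbf{v},\mathbf{w}$ whenever $\mathbf{v}-\mathbf{w}\in\pm\mathcal{B}$ is connected (any two vertices joined by a finite path). A subset $\mathcal{B}$ of a $\mathrm{Sym}$-invariant lattice $L$ is an equivariant Markov basis if $\mathrm{Sym}(\mathcal{B})=\{\sigma(\mathbf{b})\mid\sigma\in\mathrm{Sym},\mathbf{b}\in\mathcal{B}\}$ is a Markov basis of $L$. *)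

theory Defs
  imports Main
begin

definition fin_vecs :: "'a set \<Rightarrow> ('a \<Rightarrow> int) set" where
  "fin_vecs J = {u. finite {i. u i \<noteq> 0} \<and> (\<forall>i. u i \<noteq> 0 \<longrightarrow> i \<in> J)}"

definition nonneg_vecs :: "'a set \<Rightarrow> ('a \<Rightarrow> int) set" where
  "nonneg_vecs J = {u \<in> fin_vecs J. \<forall>i. u i \<ge> 0}"

definition fiber :: "'a set \<Rightarrow> ('a \<Rightarrow> int) set \<Rightarrow> ('a \<Rightarrow> int) \<Rightarrow> ('a \<Rightarrow> int) set" where
  "fiber J L u = {v \<in> nonneg_vecs J. u - v \<in> L}"

definition markov_basis :: "'a set \<Rightarrow> ('a \<Rightarrow> int) set \<Rightarrow> ('a \<Rightarrow> int) set \<Rightarrow> bool" where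
  "markov_basis J L B \<longleftrightarrow> B \<subseteq> L \<and>
     (\<forall>u \<in> nonneg_vecs J. \<forall>v \<in> fiber J L u. \<forall>w \<in> fiber J L u.
        (\<lambda>x y. x \<in> fiber J L u \<and> y \<in> fiber J L u \<and> (x - y \<in> B \<or> y - x \<in> B))\<^sup>*\<^sup>* v w)"

text \<open>Permutations of N = {1,2,...} fixing all but finitely many elements
  (encoded on nat, fixing 0).\<close>
definition Sym :: "(nat \<Rightarrow> nat) set" where
  "Sym = {\<sigma>. bij \<sigma> \<and> \<sigma> 0 = 0 \<and> finite {n. \<sigma> n \<noteq> n}}"

definition act_idx :: "nat set \<Rightarrow> (nat \<Rightarrow> nat) \<Rightarrow> (nat \<Rightarrow> nat) \<Rightarrow> (nat \<Rightarrow> nat)" where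
  "act_idx T \<sigma> i = (\<lambda>t. if t \<in> T then \<sigma> (i t) else i t)"

text \<open>Linear extension of e_i \<mapsto> e_{\<sigma> i}.\<close>
definition act_vec :: "nat set \<Rightarrow> (nat \<Rightarrow> nat) \<Rightarrow> ((nat \<Rightarrow> nat) \<Rightarrow> int) \<Rightarrow> ((nat \<Rightarrow> nat) \<Rightarrow> int)" where
  "act_vec T \<sigma> u = (\<lambda>j. \<Sum>i \<in> {i. u i \<noteq> 0 \<and> act_idx T \<sigma> i = j}. u i)"

definition equivariant_markov_basis ::
  "nat set \<Rightarrow> (nat \<Rightarrow> nat) set \<Rightarrow> ((nat \<Rightarrow> nat) \<Rightarrow> int) set \<Rightarrow> ((nat \<Rightarrow> nat) \<Rightarrow> int) set \<Rightarrow> bool" where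
  "equivariant_markov_basis T J L B \<longleftrightarrow>
     B \<subseteq> L \<and> markov_basis J L {act_vec T \<sigma> b | \<sigma> b. \<sigma> \<in> Sym \<and> b \<in> B}"

text \<open>Tuples (i_1,...,i_m) encoded as functions nat => nat that are 0 outside [m].\<close>
definition idx_set :: "nat \<Rightarrow> nat set \<Rightarrow> (nat \<Rightarrow> nat) \<Rightarrow> (nat \<Rightarrow> nat) set" where
  "idx_set m T r = {i. (\<forall>j. j \<notin> {1..m} \<longrightarrow> i j = 0) \<and>
      (\<forall>j \<in> {1..m}. (j \<in> T \<longrightarrow> 1 \<le> i j) \<and> (j \<notin> T \<longrightarrow> 1 \<le> i j \<and> i j \<le> r j))}"

definition restr :: "nat set \<Rightarrow> (nat \<Rightarrow> nat) \<Rightarrow> (nat \<Rightarrow> nat)" where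
  "restr F i = (\<lambda>j. if j \<in> F then i j else 0)"

definition mu_comp :: "nat set \<Rightarrow> ((nat \<Rightarrow> nat) \<Rightarrow> int) \<Rightarrow> (nat \<Rightarrow> nat) \<Rightarrow> int" where
  "mu_comp F u = (\<lambda>y. \<Sum>i \<in> {i. u i \<noteq> 0 \<and> restr F i = y}. u i)"

definition ker_mu :: "nat \<Rightarrow> nat set list \<Rightarrow> nat set \<Rightarrow> (nat \<Rightarrow> nat) \<Rightarrow> ((nat \<Rightarrow> nat) \<Rightarrow> int) set" where
  "ker_mu m Fs T r = {u \<in> fin_vecs (idx_set m T r). \<forall>k < length Fs. mu_comp (Fs ! k) u = (\<lambda>_. 0)}"

end

theory Submission
  imports Defs Complex_Main "HOL-Library.Multiset"
begin

lemma nat_seq_mono_sub: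
  fixes s :: "nat \<Rightarrow> nat"
  shows "\<exists>r::nat\<Rightarrow>nat. strict_mono r \<and> (\<forall>i j. i \<le> j \<longrightarrow> s (r i) \<le> s (r j))"
proof -
  obtain f where f: "strict_mono f" "monoseq (\<lambda>n. s (f n))" using seq_monosub by metis
  show ?thesis
  proof (cases "\<forall>m n. m \<le> n \<longrightarrow> s (f m) \<le> s (f n)")
    case True have "strict_mono f \<and> (\<forall>i j. i \<le> j \<longrightarrow> s (f i) \<le> s (f j))" using f(1) True by simp
    then show ?thesis by (rule exI[where x=f])
  next
    case False
    then have dec: "\<forall>m n. m \<le> n \<longrightarrow> s (f n) \<le> s (f m)" using False f(2) unfolding monoseq_def by metis
    have "\<exists>k. s (f k) = (LEAST v. \<exists>k. s (f k) = v)" by (rule LeastI_ex) auto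
    then obtain n0 where n0eq: "s (f n0) = (LEAST v. \<exists>k. s (f k) = v)" ..
    have n0: "\<forall>k. s (f n0) \<le> s (f k)"
      unfolding n0eq by (auto intro: Least_le)
    define r where "r = (\<lambda>i. f (i + n0))"
    have "strict_mono r" using f(1) unfolding r_def strict_mono_def by simp
    moreover have "\<forall>i j. i \<le> j \<longrightarrow> s (r i) \<le> s (r j)"
    proof (intro allI impI)
      fix i j :: nat assume "i \<le> j"
      have "s (r i) \<le> s (f n0)" unfolding r_def using dec by simp
      also have "\<dots> \<le> s (r j)" using n0 by (simp add: r_def)
      finally show "s (r i) \<le> s (r j)" .
    qed
    ultimately show ?thesis by (intro exI[where x=r] conjI)
  qed
qed

lemma mset_le_split:
  "(M \<subseteq># N) \<longleftrightarrow> (filter_mset (\<lambda>x. x \<noteq> a) M \<subseteq># filter_mset (\<lambda>x. x \<noteq> a) N \<and> count M a \<le> count N a)"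
proof
  assume "M \<subseteq># N"
  then show "filter_mset (\<lambda>x. x \<noteq> a) M \<subseteq># filter_mset (\<lambda>x. x \<noteq> a) N \<and> count M a \<le> count N a"
    by (simp add: multiset_filter_mono mset_subset_eq_count)
next
  assume H: "filter_mset (\<lambda>x. x \<noteq> a) M \<subseteq># filter_mset (\<lambda>x. x \<noteq> a) N \<and> count M a \<le> count N a"
  show "M \<subseteq># N"
  proof (rule mset_subset_eqI)
    fix x
    show "count M x \<le> count N x"
    proof (cases "x = a")
      case True then show ?thesis using H by simp
    next
      case False
      then have "count (filter_mset (\<lambda>x. x \<noteq> a) M) x \<le> count (filter_mset (\<lambda>x. x \<noteq> a) N) x"
        using H mset_subset_eq_count by metis
      then show ?thesis using False by simp
    qed
  qed
qed

lemma dickson_strong: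
  assumes "finite A"
  shows "\<forall>f::nat\<Rightarrow>'a multiset. (\<forall>n. set_mset (f n) \<subseteq> A) \<longrightarrow> (\<exists>r::nat\<Rightarrow>nat. strict_mono r \<and> (\<forall>i j. i \<le> j \<longrightarrow> f (r i) \<subseteq># f (r j)))"
  using assms
proof (induction A rule: finite_induct)
  case empty
  show ?case
  proof (intro allI impI)
    fix f :: "nat \<Rightarrow> 'a multiset" assume "\<forall>n. set_mset (f n) \<subseteq> {}"
    then have "\<forall>n. f n = {#}" by auto
    then show "\<exists>r::nat\<Rightarrow>nat. strict_mono r \<and> (\<forall>i j. i \<le> j \<longrightarrow> f (r i) \<subseteq># f (r j))"
      by (intro exI[where x=id] conjI) (auto simp: strict_mono_def)
  qed
next
  case (insert a A)
  show ?case
  proof (intro allI impI)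
    fix f :: "nat \<Rightarrow> 'a multiset" assume fA: "\<forall>n. set_mset (f n) \<subseteq> insert a A"
    obtain r1 :: "nat \<Rightarrow> nat" where r1: "strict_mono r1" "\<forall>i j. i \<le> j \<longrightarrow> count (f (r1 i)) a \<le> count (f (r1 j)) a"
      using nat_seq_mono_sub[of "\<lambda>n. count (f n) a"] by metis
    define g where "g = (\<lambda>n. filter_mset (\<lambda>x. x \<noteq> a) (f (r1 n)))"
    have "\<forall>n. set_mset (g n) \<subseteq> A" using fA unfolding g_def by auto
    then obtain r2 :: "nat \<Rightarrow> nat" where r2: "strict_mono r2" "\<forall>i j. i \<le> j \<longrightarrow> g (r2 i) \<subseteq># g (r2 j)"
      using insert.IH by metis
    have "strict_mono (r1 \<circ> r2)" using r1(1) r2(1) by (simp add: strict_mono_def)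
    moreover have "\<forall>i j. i \<le> j \<longrightarrow> f ((r1 \<circ> r2) i) \<subseteq># f ((r1 \<circ> r2) j)"
    proof (intro allI impI)
      fix i j :: nat assume ij: "i \<le> j"
      then have "r2 i \<le> r2 j" using r2(1) by (simp add: strict_mono_less_eq)
      then show "f ((r1 \<circ> r2) i) \<subseteq># f ((r1 \<circ> r2) j)"
        using r1(2) r2(2) ij unfolding g_def o_def by (subst mset_le_split[of _ _ a]) auto
    qed
    ultimately show "\<exists>r::nat\<Rightarrow>nat. strict_mono r \<and> (\<forall>i j. i \<le> j \<longrightarrow> f (r i) \<subseteq># f (r j))" by (intro exI[where x="r1 \<circ> r2"] conjI)
  qed
qed

lemma dickson:
  fixes f :: "nat \<Rightarrow> 'a multiset"
  assumes "finite A" "\<forall>n. set_mset (f n) \<subseteq> A"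
  shows "\<exists>i j. i < j \<and> f i \<subseteq># f j"
proof -
  obtain r :: "nat \<Rightarrow> nat" where "strict_mono r" "\<forall>i j. i \<le> j \<longrightarrow> f (r i) \<subseteq># f (r j)"
    using dickson_strong[OF assms(1)] assms(2) by metis
  then show ?thesis by (intro exI[of _ "r 0"] exI[of _ "r 1"]) (auto simp: strict_mono_def)
qed

lemma finite_minimal_basis:
  assumes "finite A" "\<forall>q\<in>Q. set_mset q \<subseteq> A"
  shows "\<exists>H. finite H \<and> H \<subseteq> Q \<and> (\<forall>q\<in>Q. \<exists>h\<in>H. h \<subseteq># q)"
proof -
  define H where "H = {h \<in> Q. \<forall>q\<in>Q. q \<subseteq># h \<longrightarrow> q = h}"
  have below: "\<forall>q. q \<in> Q \<longrightarrow> (\<exists>h\<in>H. h \<subseteq># q)" for n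
  proof (intro allI)
    fix q
    show "q \<in> Q \<longrightarrow> (\<exists>h\<in>H. h \<subseteq># q)"
    proof (induction q rule: measure_induct_rule[of size])
      case (less q)
      show ?case
      proof
        assume q: "q \<in> Q"
        show "\<exists>h\<in>H. h \<subseteq># q"
        proof (cases "q \<in> H")
          case True then show ?thesis by auto
        next
          case False
          then obtain q' where q': "q' \<in> Q" "q' \<subseteq># q" "q' \<noteq> q" using q unfolding H_def by auto
          then have "size q' < size q"
            by (simp add: mset_subset_size subset_mset.le_neq_trans)
          then obtain h where "h \<in> H" "h \<subseteq># q'" using less q'(1) by metis
          then show ?thesis using q'(2) by (meson subset_mset.order_trans)
        qed
      qed
    qed
  qed
  have "finite H"
  proof (rule ccontr)
    assume "infinite H"
    then obtain f :: "nat \<Rightarrow> _" where f: "inj f" "range f \<subseteq> H"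
      using infinite_iff_countable_subset by metis
    then have "\<forall>n. set_mset (f n) \<subseteq> A" using assms(2) unfolding H_def by auto
    then obtain i j where "i < j" "f i \<subseteq># f j" using dickson[OF assms(1)] by metis
    moreover have "f i \<in> Q" "f j \<in> H" using f(2) unfolding H_def by auto
    ultimately have "f i = f j" unfolding H_def by auto
    then show False using f(1) \<open>i < j\<close> by (simp add: inj_eq)
  qed
  moreover have "H \<subseteq> Q" unfolding H_def by auto
  ultimately show ?thesis using below by metis
qed

locale hs =
  fixes m :: nat and Fs :: "nat set list" and T :: "nat set" and r :: "nat \<Rightarrow> nat"
  assumes facets_sub: "\<forall>k < length Fs. Fs ! k \<subseteq> {1..m}"
    and T_sub: "T \<subseteq> {1..m}"
    and T_indep: "\<forall>k < length Fs. card (T \<inter> Fs ! k) \<le> 1"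
begin

definition "J = idx_set m T r"
definition col :: "(nat \<Rightarrow> nat) \<Rightarrow> (nat \<Rightarrow> nat)" where "col i = (\<lambda>j. if j \<in> T then 0 else i j)"
definition key :: "nat \<Rightarrow> (nat \<Rightarrow> nat) \<Rightarrow> nat \<times> (nat \<Rightarrow> nat)" where "key t i = (i t, col i)"
definition marg :: "(nat \<Rightarrow> nat) multiset \<Rightarrow> (nat \<Rightarrow> nat) multiset \<Rightarrow> bool" where
  "marg U V \<longleftrightarrow> (\<forall>k<length Fs. image_mset (restr (Fs!k)) U = image_mset (restr (Fs!k)) V)"
definition peq :: "(nat \<Rightarrow> nat) multiset \<Rightarrow> (nat \<Rightarrow> nat) multiset \<Rightarrow> bool" where
  "peq U V \<longleftrightarrow> image_mset col U = image_mset col V \<and> (\<forall>t\<in>T. image_mset (key t) U = image_mset (key t) V)"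
definition "CJ = col ` J"

lemma finT: "finite T" using T_sub finite_subset by blast

lemma J_lab: "i \<in> J \<Longrightarrow> t \<in> T \<Longrightarrow> 1 \<le> i t"
  using T_sub unfolding J_def idx_set_def by auto

lemma J_upd: "i \<in> J \<Longrightarrow> t \<in> T \<Longrightarrow> 1 \<le> a \<Longrightarrow> i(t := a) \<in> J"
  using T_sub unfolding J_def idx_set_def by auto

lemma col_upd: "t \<in> T \<Longrightarrow> col (i(t := a)) = col i"
  unfolding col_def by auto

lemma item_eq: "col x = col y \<Longrightarrow> \<forall>t\<in>T. x t = y t \<Longrightarrow> x = y"
proof (rule ext)
  fix j assume c: "col x = col y" and tt: "\<forall>t\<in>T. x t = y t"
  show "x j = y j"
  proof (cases "j \<in> T")
    case True then show ?thesis using tt by simp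
  next
    case False then show ?thesis using fun_cong[OF c, of j] unfolding col_def by simp
  qed
qed

lemma finite_CJ: "finite CJ"
proof -
  define b where "b = Max (r ` {1..m})"
  have "CJ \<subseteq> {f. \<forall>x. (x \<in> {1..m} \<longrightarrow> f x \<in> {0..b}) \<and> (x \<notin> {1..m} \<longrightarrow> f x = 0)}"
  proof
    fix c assume "c \<in> CJ"
    then obtain i where i: "i \<in> J" "c = col i" unfolding CJ_def by auto
    show "c \<in> {f. \<forall>x. (x \<in> {1..m} \<longrightarrow> f x \<in> {0..b}) \<and> (x \<notin> {1..m} \<longrightarrow> f x = 0)}"
    proof (intro CollectI allI conjI impI)
      fix x assume x: "x \<in> {1..m}"
      show "c x \<in> {0..b}"
      proof (cases "x \<in> T")
        case True then show ?thesis using i unfolding col_def by simp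
      next
        case False
        then have "c x \<le> r x" using i x unfolding J_def idx_set_def col_def by auto
        also have "r x \<le> b" unfolding b_def using x by (intro Max_ge) auto
        finally show ?thesis by simp
      qed
    next
      fix x assume "x \<notin> {1..m}"
      then show "c x = 0" using i unfolding J_def idx_set_def col_def by auto
    qed
  qed
  moreover have "finite {f. \<forall>x. (x \<in> {1..m} \<longrightarrow> f x \<in> {0..b}) \<and> (x \<notin> {1..m} \<longrightarrow> f x = (0::nat))}"
    by (rule finite_set_of_finite_funs) auto
  ultimately show ?thesis using finite_subset by blast
qed

lemma facet_cases:
  assumes "k < length Fs"
  shows "Fs!k \<inter> T = {} \<or> (\<exists>t\<in>T. Fs!k \<inter> T = {t})"
proof -
  have "finite (T \<inter> Fs!k)" using finT by simp
  moreover have "card (T \<inter> Fs ! k) \<le> 1" using T_indep assms by simp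
  ultimately have "T \<inter> Fs!k = {} \<or> (\<exists>t. T \<inter> Fs!k = {t})"
    by (metis card_0_eq card_1_singletonE le_SucE le_zero_eq One_nat_def)
  then show ?thesis by auto
qed

lemma restr_col: "F \<inter> T = {} \<Longrightarrow> restr F i = restr F (col i)"
  unfolding restr_def col_def by (rule ext) auto

lemma restr_key: "F \<inter> T = {t} \<Longrightarrow> restr F i = (restr F (col i))(t := i t)"
  unfolding restr_def col_def by (rule ext) auto

lemma restr_col_t: "F \<inter> T = {t} \<Longrightarrow> restr F (col i) = (restr F i)(t := 0)"
  unfolding restr_def col_def by (rule ext) auto

lemma marg_refl: "marg U U" unfolding marg_def by simp
lemma marg_sym: "marg U V \<Longrightarrow> marg V U" unfolding marg_def by simp
lemma marg_trans: "marg U V \<Longrightarrow> marg V W \<Longrightarrow> marg U W" unfolding marg_def by simp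
lemma marg_add: "marg U V \<Longrightarrow> marg X Y \<Longrightarrow> marg (U + X) (V + Y)" unfolding marg_def by simp
lemma marg_cancel: "marg (U + W) (V + W) \<Longrightarrow> marg U V" unfolding marg_def by simp
lemma marg_cancel2: "marg (W + U) (X + V) \<Longrightarrow> marg W X \<Longrightarrow> marg U V"
  unfolding marg_def by simp

lemma peq_marg:
  assumes "peq U V" shows "marg U V"
  unfolding marg_def
proof (intro allI impI)
  fix k assume k: "k < length Fs"
  let ?F = "Fs!k"
  from facet_cases[OF k] show "image_mset (restr ?F) U = image_mset (restr ?F) V"
  proof
    assume e: "?F \<inter> T = {}"
    have "image_mset (restr ?F) U = image_mset (restr ?F) (image_mset col U)"
      by (simp add: image_mset.compositionality o_def restr_col[OF e, symmetric])
    moreover have "image_mset (restr ?F) V = image_mset (restr ?F) (image_mset col V)"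
      by (simp add: image_mset.compositionality o_def restr_col[OF e, symmetric])
    ultimately show ?thesis using assms unfolding peq_def by simp
  next
    assume "\<exists>t\<in>T. ?F \<inter> T = {t}"
    then obtain t where t: "t \<in> T" "?F \<inter> T = {t}" by blast
    define h where "h = (\<lambda>p::nat \<times> (nat \<Rightarrow> nat). (restr ?F (snd p))(t := fst p))"
    have "\<And>W. image_mset (restr ?F) W = image_mset h (image_mset (key t) W)"
      by (simp add: image_mset.compositionality o_def h_def key_def restr_key[OF t(2), symmetric])
    then show ?thesis using assms t(1) unfolding peq_def by metis
  qed
qed

end

definition sl :: "nat \<Rightarrow> (nat \<times> 'b) multiset \<Rightarrow> 'b multiset" where
  "sl a P = image_mset snd (filter_mset (\<lambda>p. fst p = a) P)"

context hs begin

definition E :: "nat \<Rightarrow> ((nat \<Rightarrow> nat) multiset \<times> (nat \<Rightarrow> nat) multiset) set" where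
  "E t = {(x,y). set_mset x \<subseteq> CJ \<and> set_mset y \<subseteq> CJ \<and>
     (\<forall>k<length Fs. t \<in> Fs!k \<longrightarrow> image_mset (restr (Fs!k)) x = image_mset (restr (Fs!k)) y)}"

definition E0 :: "((nat \<Rightarrow> nat) multiset \<times> (nat \<Rightarrow> nat) multiset) set" where
  "E0 = {(x,y). set_mset x \<subseteq> CJ \<and> set_mset y \<subseteq> CJ \<and>
     (\<forall>k<length Fs. Fs!k \<inter> T = {} \<longrightarrow> image_mset (restr (Fs!k)) x = image_mset (restr (Fs!k)) y)}"

lemma sl_key: "sl a (image_mset (key t) U) = image_mset col (filter_mset (\<lambda>i. i t = a) U)"
  by (simp add: sl_def filter_mset_image_mset image_mset.compositionality o_def key_def)

lemma restr_at: "t \<in> F \<Longrightarrow> restr F i t = i t"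
  unfolding restr_def by simp

lemma filt_restr:
  assumes "t \<in> F"
  shows "filter_mset (\<lambda>g. g t = a) (image_mset (restr F) U) = image_mset (restr F) (filter_mset (\<lambda>i. i t = a) U)"
proof -
  have "filter_mset (\<lambda>g. g t = a) (image_mset (restr F) U) = image_mset (restr F) (filter_mset (\<lambda>i. restr F i t = a) U)"
    by (simp add: filter_mset_image_mset)
  also have "filter_mset (\<lambda>i. restr F i t = a) U = filter_mset (\<lambda>i. i t = a) U"
    using restr_at[OF assms] by simp
  finally show ?thesis .
qed

lemma slice_img:
  assumes "F \<inter> T = {t}"
  shows "image_mset (restr F) (sl a (image_mset (key t) U)) =
         image_mset (\<lambda>g. g(t:=0)) (filter_mset (\<lambda>g. g t = a) (image_mset (restr F) U))"
proof -
  have tF: "t \<in> F" using assms by auto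
  have "image_mset (\<lambda>g. g(t:=0)) (filter_mset (\<lambda>g. g t = a) (image_mset (restr F) U))
      = image_mset (\<lambda>i. (restr F i)(t:=0)) (filter_mset (\<lambda>i. i t = a) U)"
    by (simp add: filt_restr[OF tF] image_mset.compositionality o_def)
  also have "\<dots> = image_mset (\<lambda>i. restr F (col i)) (filter_mset (\<lambda>i. i t = a) U)"
    by (simp add: restr_col_t[OF assms])
  finally show ?thesis by (simp add: sl_key image_mset.compositionality o_def)
qed

lemma filt_img:
  assumes "F \<inter> T = {t}"
  shows "filter_mset (\<lambda>g. g t = a) (image_mset (restr F) U) =
         image_mset (\<lambda>g. g(t:=a)) (image_mset (restr F) (sl a (image_mset (key t) U)))"
proof -
  have tF: "t \<in> F" using assms by auto
  have "image_mset (\<lambda>g. g(t:=a)) (image_mset (restr F) (sl a (image_mset (key t) U)))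
     = image_mset (\<lambda>i. (restr F (col i))(t:=a)) (filter_mset (\<lambda>i. i t = a) U)"
    by (simp add: sl_key image_mset.compositionality o_def)
  also have "\<dots> = image_mset (restr F) (filter_mset (\<lambda>i. i t = a) U)"
  proof (rule image_mset_cong)
    fix i assume "i \<in># filter_mset (\<lambda>i. i t = a) U"
    then have "i t = a" by simp
    then show "(restr F (col i))(t:=a) = restr F i" using restr_key[OF assms, of i] by simp
  qed
  finally show ?thesis by (simp add: filt_restr[OF tF])
qed

lemma facet_t:
  assumes "k < length Fs" "t \<in> T" "t \<in> Fs!k"
  shows "Fs!k \<inter> T = {t}"
proof -
  have "t \<in> Fs!k \<inter> T" using assms by simp
  then show ?thesis using facet_cases[OF assms(1)] by (metis empty_iff singletonD)
qed

lemma set_col: "set_mset U \<subseteq> J \<Longrightarrow> set_mset (image_mset col U) \<subseteq> CJ"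
  unfolding CJ_def by auto

lemma set_sl: "set_mset U \<subseteq> J \<Longrightarrow> set_mset (sl a (image_mset (key t) U)) \<subseteq> CJ"
  unfolding CJ_def sl_key by auto

lemma marg_slices:
  assumes UJ: "set_mset U \<subseteq> J" and VJ: "set_mset V \<subseteq> J"
  shows "marg U V \<longleftrightarrow> (image_mset col U, image_mset col V) \<in> E0 \<and>
     (\<forall>t\<in>T. \<forall>a. (sl a (image_mset (key t) U), sl a (image_mset (key t) V)) \<in> E t)"
proof
  assume mg: "marg U V"
  have "(image_mset col U, image_mset col V) \<in> E0"
    unfolding E0_def
  proof (intro CollectI case_prodI conjI allI impI)
    fix k assume k: "k < length Fs" and e: "Fs!k \<inter> T = {}"
    show "image_mset (restr (Fs!k)) (image_mset col U) = image_mset (restr (Fs!k)) (image_mset col V)"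
      using mg k unfolding marg_def
      by (simp add: image_mset.compositionality o_def restr_col[OF e, symmetric])
  qed (use set_col UJ VJ in auto)
  moreover have "\<forall>t\<in>T. \<forall>a. (sl a (image_mset (key t) U), sl a (image_mset (key t) V)) \<in> E t"
  proof (intro ballI allI)
    fix t a assume t: "t \<in> T"
    show "(sl a (image_mset (key t) U), sl a (image_mset (key t) V)) \<in> E t"
      unfolding E_def
    proof (intro CollectI case_prodI conjI allI impI)
      fix k assume k: "k < length Fs" and tk: "t \<in> Fs!k"
      have ft: "Fs!k \<inter> T = {t}" using facet_t[OF k t tk] .
      show "image_mset (restr (Fs!k)) (sl a (image_mset (key t) U)) = image_mset (restr (Fs!k)) (sl a (image_mset (key t) V))"
        using mg k unfolding marg_def slice_img[OF ft] by simp
    qed (use set_sl UJ VJ in auto)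
  qed
  ultimately show "(image_mset col U, image_mset col V) \<in> E0 \<and>
     (\<forall>t\<in>T. \<forall>a. (sl a (image_mset (key t) U), sl a (image_mset (key t) V)) \<in> E t)" by simp
next
  assume H: "(image_mset col U, image_mset col V) \<in> E0 \<and>
     (\<forall>t\<in>T. \<forall>a. (sl a (image_mset (key t) U), sl a (image_mset (key t) V)) \<in> E t)"
  show "marg U V" unfolding marg_def
  proof (intro allI impI)
    fix k assume k: "k < length Fs"
    from facet_cases[OF k] show "image_mset (restr (Fs!k)) U = image_mset (restr (Fs!k)) V"
    proof
      assume e: "Fs!k \<inter> T = {}"
      have "\<And>W. image_mset (restr (Fs!k)) W = image_mset (restr (Fs!k)) (image_mset col W)"
        by (simp add: image_mset.compositionality o_def restr_col[OF e, symmetric])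
      moreover have "image_mset (restr (Fs!k)) (image_mset col U) = image_mset (restr (Fs!k)) (image_mset col V)"
        using H k e unfolding E0_def by blast
      ultimately show ?thesis by metis
    next
      assume "\<exists>t\<in>T. Fs!k \<inter> T = {t}"
      then obtain t where t: "t \<in> T" "Fs!k \<inter> T = {t}" by blast
      have tk: "t \<in> Fs!k" using t by auto
      have sl_eq: "\<And>a. image_mset (restr (Fs!k)) (sl a (image_mset (key t) U)) = image_mset (restr (Fs!k)) (sl a (image_mset (key t) V))"
        using H t(1) k tk unfolding E_def by auto
      show ?thesis
      proof (rule multiset_eqI)
        fix g
        have "count (image_mset (restr (Fs!k)) U) g = count (filter_mset (\<lambda>g'. g' t = g t) (image_mset (restr (Fs!k)) U)) g"
          by simp
        also have "\<dots> = count (filter_mset (\<lambda>g'. g' t = g t) (image_mset (restr (Fs!k)) V)) g"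
          unfolding filt_img[OF t(2)] sl_eq ..
        also have "\<dots> = count (image_mset (restr (Fs!k)) V) g" by simp
        finally show "count (image_mset (restr (Fs!k)) U) g = count (image_mset (restr (Fs!k)) V) g" .
      qed
    qed
  qed
qed

lemma realize:
  assumes "\<forall>t\<in>T. image_mset snd (P t) = S" "\<forall>t\<in>T. \<forall>p\<in>#P t. 1 \<le> fst p" "set_mset S \<subseteq> CJ"
  shows "\<exists>X. set_mset X \<subseteq> J \<and> image_mset col X = S \<and> (\<forall>t\<in>T. image_mset (key t) X = P t)"
  using assms
proof (induction S arbitrary: P)
  case empty
  then have "\<forall>t\<in>T. P t = {#}" by simp
  then show ?case by (intro exI[where x="{#}"]) simp
next
  case (add c S)
  have "\<forall>t\<in>T. \<exists>a. (a, c) \<in># P t"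
  proof
    fix t assume t: "t \<in> T"
    have "c \<in># image_mset snd (P t)" using add.prems(1) t by simp
    then show "\<exists>a. (a, c) \<in># P t" by auto
  qed
  then obtain l where l: "\<forall>t\<in>T. (l t, c) \<in># P t" by metis
  define P' where "P' = (\<lambda>t. P t - {#(l t, c)#})"
  have "\<forall>t\<in>T. image_mset snd (P' t) = S"
  proof
    fix t assume t: "t \<in> T"
    have "image_mset snd (P' t) = image_mset snd (P t) - {#c#}"
      unfolding P'_def using l t by (simp add: image_mset_Diff)
    then show "image_mset snd (P' t) = S" using add.prems(1) t by simp
  qed
  moreover have "\<forall>t\<in>T. \<forall>p\<in>#P' t. 1 \<le> fst p"
    using add.prems(2) unfolding P'_def by (meson in_diffD)
  moreover have "set_mset S \<subseteq> CJ" using add.prems(3) by simp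
  ultimately obtain X' where X': "set_mset X' \<subseteq> J" "image_mset col X' = S" "\<forall>t\<in>T. image_mset (key t) X' = P' t"
    using add.IH by blast
  have "c \<in> CJ" using add.prems(3) by simp
  then obtain i where i: "i \<in> J" "c = col i" unfolding CJ_def by auto
  define x where "x = (\<lambda>j. if j \<in> T then l j else i j)"
  have lpos: "\<forall>t\<in>T. 1 \<le> l t" using l add.prems(2) by fastforce
  have xJ: "x \<in> J" using i(1) lpos T_sub unfolding J_def idx_set_def x_def by auto
  have "col x = col i" unfolding col_def x_def by (rule ext) simp
  then have colx: "col x = c" using i(2) by simp
  have xt: "\<forall>t\<in>T. x t = l t" unfolding x_def by simp
  have keyx: "\<forall>t\<in>T. key t x = (l t, c)" using xt colx unfolding key_def by simp
  show ?case
  proof (intro exI[where x="add_mset x X'"] conjI ballI)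
    show "set_mset (add_mset x X') \<subseteq> J" using xJ X'(1) by simp
    show "image_mset col (add_mset x X') = add_mset c S" using colx X'(2) by simp
  next
    fix t assume t: "t \<in> T"
    have "image_mset (key t) (add_mset x X') = add_mset (l t, c) (P t - {#(l t, c)#})"
      using keyx X'(3) t unfolding P'_def by simp
    also have "\<dots> = P t" using l t by simp
    finally show "image_mset (key t) (add_mset x X') = P t" .
  qed
qed

end

context hs begin

definition sw :: "(nat \<Rightarrow> nat) multiset \<Rightarrow> (nat \<Rightarrow> nat) multiset \<Rightarrow> bool" where
  "sw U U' \<longleftrightarrow> (\<exists>y z t Z. U = {#y, z#} + Z \<and> U' = {#y(t := z t), z(t := y t)#} + Z \<and>
      t \<in> T \<and> col y = col z \<and> set_mset U \<subseteq> J)"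

lemma sw_J: "sw U U' \<Longrightarrow> set_mset U' \<subseteq> J"
proof -
  assume "sw U U'"
  then obtain y z t Z where h: "U = {#y, z#} + Z" "U' = {#y(t := z t), z(t := y t)#} + Z"
      "t \<in> T" "col y = col z" "set_mset U \<subseteq> J" unfolding sw_def by blast
  have "y \<in> J" "z \<in> J" "set_mset Z \<subseteq> J" using h(1,5) by auto
  then have "y(t := z t) \<in> J" "z(t := y t) \<in> J" using J_upd J_lab h(3) by auto
  then show ?thesis using h(2) \<open>set_mset Z \<subseteq> J\<close> by auto
qed

lemma sw_peq: "sw U U' \<Longrightarrow> peq U U'"
proof -
  assume "sw U U'"
  then obtain y z t Z where h: "U = {#y, z#} + Z" "U' = {#y(t := z t), z(t := y t)#} + Z"
      "t \<in> T" "col y = col z" "set_mset U \<subseteq> J" unfolding sw_def by blast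
  have c1: "col (y(t := z t)) = col y" "col (z(t := y t)) = col z" using col_upd h(3) by auto
  show ?thesis unfolding peq_def
  proof (intro conjI ballI)
    show "image_mset col U = image_mset col U'" using c1 h(1,2) by simp
  next
    fix s assume s: "s \<in> T"
    show "image_mset (key s) U = image_mset (key s) U'"
    proof (cases "s = t")
      case True
      then show ?thesis using c1 h(1,2,4) unfolding key_def by (simp add: add_mset_commute)
    next
      case False
      then show ?thesis using c1 h(1,2) unfolding key_def by simp
    qed
  qed
qed

lemma peq_refl: "peq U U" unfolding peq_def by simp
lemma peq_sym: "peq U V \<Longrightarrow> peq V U" unfolding peq_def by simp
lemma peq_trans: "peq U V \<Longrightarrow> peq V W \<Longrightarrow> peq U W" unfolding peq_def by simp

lemma sw_add: "sw U U' \<Longrightarrow> set_mset W \<subseteq> J \<Longrightarrow> sw (U + W) (U' + W)"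
  unfolding sw_def by (metis (no_types, lifting) set_mset_union Un_subset_iff union_assoc)

lemma sws_add: "sw\<^sup>*\<^sup>* U U' \<Longrightarrow> set_mset W \<subseteq> J \<Longrightarrow> sw\<^sup>*\<^sup>* (U + W) (U' + W)"
proof (induction rule: rtranclp_induct)
  case base then show ?case by simp
next
  case (step y z)
  then show ?case using sw_add by (meson rtranclp.rtrancl_into_rtrancl)
qed

lemma sws_J: "sw\<^sup>*\<^sup>* U U' \<Longrightarrow> set_mset U \<subseteq> J \<Longrightarrow> set_mset U' \<subseteq> J"
  by (induction rule: rtranclp_induct) (auto dest: sw_J)

lemma sws_peq: "sw\<^sup>*\<^sup>* U U' \<Longrightarrow> peq U U'"
  by (induction rule: rtranclp_induct) (auto intro: peq_refl dest: sw_peq peq_trans)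

lemma bring:
  assumes VJ: "set_mset V \<subseteq> J" and xV: "x \<in># V"
  shows "\<forall>U. peq U V \<and> set_mset U \<subseteq> J \<and> (\<exists>y\<in>#U. col y = col x \<and> card {t\<in>T. y t \<noteq> x t} \<le> n) \<longrightarrow>
      (\<exists>U'. sw\<^sup>*\<^sup>* U U' \<and> peq U' V \<and> set_mset U' \<subseteq> J \<and> x \<in># U')"
proof (induction n)
  case 0
  show ?case
  proof (intro allI impI)
    fix U assume H: "peq U V \<and> set_mset U \<subseteq> J \<and> (\<exists>y\<in>#U. col y = col x \<and> card {t\<in>T. y t \<noteq> x t} \<le> 0)"
    then obtain y where y: "y \<in># U" "col y = col x" "card {t\<in>T. y t \<noteq> x t} \<le> 0" by blast
    have "finite {t\<in>T. y t \<noteq> x t}" using finT by simp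
    then have "{t\<in>T. y t \<noteq> x t} = {}" using y(3) by simp
    then have "y = x" using item_eq[OF y(2)] by blast
    then show "\<exists>U'. sw\<^sup>*\<^sup>* U U' \<and> peq U' V \<and> set_mset U' \<subseteq> J \<and> x \<in># U'"
      using H y(1) by blast
  qed
next
  case (Suc n)
  show ?case
  proof (intro allI impI)
    fix U assume H: "peq U V \<and> set_mset U \<subseteq> J \<and> (\<exists>y\<in>#U. col y = col x \<and> card {t\<in>T. y t \<noteq> x t} \<le> Suc n)"
    then obtain y where y: "y \<in># U" "col y = col x" "card {t\<in>T. y t \<noteq> x t} \<le> Suc n" by blast
    have UJ: "set_mset U \<subseteq> J" and pUV: "peq U V" using H by auto
    show "\<exists>U'. sw\<^sup>*\<^sup>* U U' \<and> peq U' V \<and> set_mset U' \<subseteq> J \<and> x \<in># U'"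
    proof (cases "{t\<in>T. y t \<noteq> x t} = {}")
      case True
      then have "y = x" using item_eq[OF y(2)] by blast
      then show ?thesis using H y(1) by blast
    next
      case False
      then obtain t where t: "t \<in> T" "y t \<noteq> x t" by blast
      have "key t x \<in># image_mset (key t) V" using xV by simp
      then have "key t x \<in># image_mset (key t) U" using pUV t(1) unfolding peq_def by simp
      then obtain z where z: "z \<in># U" "key t z = key t x" by auto
      have zt: "z t = x t" and zc: "col z = col x" using z(2) unfolding key_def by auto
      have zy: "z \<noteq> y" using zt t(2) by auto
      define Z where "Z = U - {#y#} - {#z#}"
      have "z \<in># U - {#y#}" using z(1) zy by (simp add: in_diff_count)
      then have Ueq: "U = {#y, z#} + Z" unfolding Z_def using y(1)
        by (metis add_mset_add_single insert_DiffM union_mset_add_mset_left union_mset_add_mset_right add_0)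
      define U1 where "U1 = {#y(t := z t), z(t := y t)#} + Z"
      have swU: "sw U U1" unfolding sw_def U1_def
        by (rule exI[where x=y], rule exI[where x=z], rule exI[where x=t], rule exI[where x=Z])
           (use Ueq t(1) y(2) zc UJ in simp)
      have U1J: "set_mset U1 \<subseteq> J" using sw_J[OF swU] .
      have pU1: "peq U1 V" using peq_trans[OF peq_sym[OF sw_peq[OF swU]] pUV] .
      have y1: "y(t := z t) \<in># U1" unfolding U1_def by simp
      have c1: "col (y(t := z t)) = col x" using col_upd[OF t(1)] y(2) by simp
      have sub: "{s\<in>T. (y(t := z t)) s \<noteq> x s} \<subseteq> {s\<in>T. y s \<noteq> x s} - {t}"
        using zt by auto
      have "card {s\<in>T. (y(t := z t)) s \<noteq> x s} \<le> card ({s\<in>T. y s \<noteq> x s} - {t})"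
        using sub finT by (intro card_mono) auto
      also have "\<dots> = card {s\<in>T. y s \<noteq> x s} - 1" using t by (simp add: card_Diff_singleton finT)
      also have "\<dots> \<le> n" using y(3) by simp
      finally have "card {s\<in>T. (y(t := z t)) s \<noteq> x s} \<le> n" .
      then obtain U' where U': "sw\<^sup>*\<^sup>* U1 U'" "peq U' V" "set_mset U' \<subseteq> J" "x \<in># U'"
        using Suc.IH pU1 U1J y1 c1 by blast
      then show ?thesis using swU by (meson converse_rtranclp_into_rtranclp)
    qed
  qed
qed

lemma swap_conn:
  "peq U V \<Longrightarrow> set_mset U \<subseteq> J \<Longrightarrow> set_mset V \<subseteq> J \<Longrightarrow> sw\<^sup>*\<^sup>* U V"
proof (induction "size U" arbitrary: U V rule: less_induct)
  case less
  show ?case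
  proof (cases "V = {#}")
    case True
    then have "image_mset col U = {#}" using less.prems(1) unfolding peq_def by simp
    then show ?thesis using True by simp
  next
    case False
    then obtain x where xV: "x \<in># V" by (meson multiset_nonemptyE)
    have "col x \<in># image_mset col U" using less.prems(1) xV unfolding peq_def by simp
    then obtain y where y: "y \<in># U" "col y = col x" by auto
    have "card {t\<in>T. y t \<noteq> x t} \<le> card T" using finT by (intro card_mono) auto
    then obtain U' where U': "sw\<^sup>*\<^sup>* U U'" "peq U' V" "set_mset U' \<subseteq> J" "x \<in># U'"
      using bring[OF less.prems(3) xV, of "card T"] less.prems(1,2) y by blast
    define U0 where "U0 = U' - {#x#}"
    define V0 where "V0 = V - {#x#}"
    have U'eq: "U' = U0 + {#x#}" unfolding U0_def using U'(4) by simp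
    have Veq: "V = V0 + {#x#}" unfolding V0_def using xV by simp
    have "peq U0 V0" using U'(2) unfolding peq_def U'eq Veq by simp
    moreover have "size U0 < size U"
    proof -
      have "size U' = size U" using sws_peq[OF U'(1)] unfolding peq_def by (metis size_image_mset)
      then show ?thesis using U'eq by simp
    qed
    moreover have "set_mset U0 \<subseteq> J" "set_mset V0 \<subseteq> J" using U'(3) less.prems(3) U'eq Veq by auto
    ultimately have "sw\<^sup>*\<^sup>* U0 V0" using less.hyps by blast
    moreover have "set_mset {#x#} \<subseteq> J" using xV less.prems(3) by auto
    ultimately have "sw\<^sup>*\<^sup>* (U0 + {#x#}) (V0 + {#x#})" by (rule sws_add)
    then show ?thesis using U'(1) U'eq Veq by simp
  qed
qed

end

lemma count_img_inj: "inj f \<Longrightarrow> count (image_mset f M) (f x) = count M x"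
  by (induction M) (auto simp: inj_eq)

lemma count_img_notin: "(\<forall>a. f a \<noteq> y) \<Longrightarrow> count (image_mset f M) y = 0"
  by (induction M) auto

definition enc3 :: "'a multiset \<times> 'b multiset \<times> 'c multiset \<Rightarrow> ('a + 'b + 'c) multiset" where
  "enc3 q = image_mset Inl (fst q) + image_mset (Inr \<circ> Inl) (fst (snd q)) + image_mset (Inr \<circ> Inr) (snd (snd q))"

definition le3 :: "'a multiset \<times> 'b multiset \<times> 'c multiset \<Rightarrow> 'a multiset \<times> 'b multiset \<times> 'c multiset \<Rightarrow> bool" where
  "le3 h q \<longleftrightarrow> fst h \<subseteq># fst q \<and> fst (snd h) \<subseteq># fst (snd q) \<and> snd (snd h) \<subseteq># snd (snd q)"

lemma enc3_count:
  "count (enc3 q) (Inl a) = count (fst q) a"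
  "count (enc3 q) (Inr (Inl b)) = count (fst (snd q)) b"
  "count (enc3 q) (Inr (Inr c)) = count (snd (snd q)) c"
proof -
  have i1: "inj (Inl :: 'a \<Rightarrow> 'a + 'b + 'c)" by (simp add: inj_def)
  have i2: "inj (Inr \<circ> Inl :: 'b \<Rightarrow> 'a + 'b + 'c)" by (simp add: inj_def)
  have i3: "inj (Inr \<circ> Inr :: 'c \<Rightarrow> 'a + 'b + 'c)" by (simp add: inj_def)
  show "count (enc3 q) (Inl a) = count (fst q) a"
    unfolding enc3_def using count_img_inj[OF i1, of "fst q" a]
      count_img_notin[of "Inr \<circ> Inl" "Inl a" "fst (snd q)"] count_img_notin[of "Inr \<circ> Inr" "Inl a" "snd (snd q)"]
    by simp
  show "count (enc3 q) (Inr (Inl b)) = count (fst (snd q)) b"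
    unfolding enc3_def using count_img_inj[OF i2, of "fst (snd q)" b]
      count_img_notin[of "Inl" "Inr (Inl b)" "fst q"] count_img_notin[of "Inr \<circ> Inr" "Inr (Inl b)" "snd (snd q)"]
    by simp
  show "count (enc3 q) (Inr (Inr c)) = count (snd (snd q)) c"
    unfolding enc3_def using count_img_inj[OF i3, of "snd (snd q)" c]
      count_img_notin[of "Inl" "Inr (Inr c)" "fst q"] count_img_notin[of "Inr \<circ> Inl" "Inr (Inr c)" "fst (snd q)"]
    by simp
qed

lemma enc3_le: "enc3 h \<subseteq># enc3 q \<longleftrightarrow> le3 h q"
proof
  assume H: "enc3 h \<subseteq># enc3 q"
  have c: "\<And>x. count (enc3 h) x \<le> count (enc3 q) x" using H by (simp add: subseteq_mset_def)
  have "\<And>a. count (fst h) a \<le> count (fst q) a" using c[of "Inl _"] by (simp add: enc3_count)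
  moreover have "\<And>a. count (fst (snd h)) a \<le> count (fst (snd q)) a" using c[of "Inr (Inl _)"] by (simp add: enc3_count)
  moreover have "\<And>a. count (snd (snd h)) a \<le> count (snd (snd q)) a" using c[of "Inr (Inr _)"] by (simp add: enc3_count)
  ultimately show "le3 h q" unfolding le3_def subseteq_mset_def by simp
next
  assume H: "le3 h q"
  show "enc3 h \<subseteq># enc3 q"
  proof (rule mset_subset_eqI)
    fix x :: "'a + 'b + 'c"
    show "count (enc3 h) x \<le> count (enc3 q) x"
    proof (cases x)
      case (Inl a) then show ?thesis using H unfolding le3_def subseteq_mset_def by (simp add: enc3_count)
    next
      case (Inr y)
      then show ?thesis
      proof (cases y)
        case (Inl b) then show ?thesis using H \<open>x = Inr y\<close> unfolding le3_def subseteq_mset_def by (simp add: enc3_count)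
      next
        case (Inr c) then show ?thesis using H \<open>x = Inr y\<close> unfolding le3_def subseteq_mset_def by (simp add: enc3_count)
      qed
    qed
  qed
qed

lemma enc3_inj: "inj enc3"
proof (rule injI)
  fix p q :: "'a multiset \<times> 'b multiset \<times> 'c multiset"
  assume "enc3 p = enc3 q"
  then have "le3 p q" "le3 q p" using enc3_le by (metis subset_mset.order_refl)+
  then show "p = q" unfolding le3_def by (metis prod_eqI subset_mset.antisym)
qed

lemma triple_basis:
  fixes Q :: "('a multiset \<times> 'b multiset \<times> 'c multiset) set"
  assumes "finite A" "finite B" "finite C"
    and "\<forall>q\<in>Q. set_mset (fst q) \<subseteq> A \<and> set_mset (fst (snd q)) \<subseteq> B \<and> set_mset (snd (snd q)) \<subseteq> C"
  shows "\<exists>H. finite H \<and> H \<subseteq> Q \<and> (\<forall>q\<in>Q. \<exists>h\<in>H. le3 h q)"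
proof -
  define D where "D = Inl ` A \<union> (Inr \<circ> Inl) ` B \<union> (Inr \<circ> Inr) ` C"
  have fD: "finite D" using assms(1-3) unfolding D_def by simp
  have "\<forall>q\<in>enc3 ` Q. set_mset q \<subseteq> D"
  proof
    fix q' assume "q' \<in> enc3 ` Q"
    then obtain q where q: "q \<in> Q" "q' = enc3 q" by blast
    have s: "set_mset (enc3 q) = Inl ` set_mset (fst q) \<union> (Inr \<circ> Inl) ` set_mset (fst (snd q)) \<union> (Inr \<circ> Inr) ` set_mset (snd (snd q))"
      unfolding enc3_def by simp
    have "set_mset (fst q) \<subseteq> A" "set_mset (fst (snd q)) \<subseteq> B" "set_mset (snd (snd q)) \<subseteq> C"
      using assms(4) q(1) by auto
    then have "set_mset (enc3 q) \<subseteq> D" unfolding s D_def by (intro Un_mono image_mono)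
    then show "set_mset q' \<subseteq> D" using q(2) by simp
  qed
  then have "\<exists>H'. finite H' \<and> H' \<subseteq> enc3 ` Q \<and> (\<forall>q\<in>enc3 ` Q. \<exists>h\<in>H'. h \<subseteq># q)"
    by (rule finite_minimal_basis[OF fD])
  then obtain H' where H': "finite H'" "H' \<subseteq> enc3 ` Q" "\<forall>q\<in>enc3 ` Q. \<exists>h\<in>H'. h \<subseteq># q"
    by auto
  define H where "H = Q \<inter> enc3 -` H'"
  have "finite H" unfolding H_def using finite_vimageI[OF H'(1) enc3_inj] by simp
  moreover have "H \<subseteq> Q" unfolding H_def by simp
  moreover have "\<forall>q\<in>Q. \<exists>h\<in>H. le3 h q"
  proof
    fix q assume q: "q \<in> Q"
    then obtain h' where h': "h' \<in> H'" "h' \<subseteq># enc3 q" using H'(3) by blast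
    then obtain h where h: "h \<in> Q" "h' = enc3 h" using H'(2) by blast
    then have "h \<in> H" unfolding H_def using h' by simp
    moreover have "le3 h q" using h' h enc3_le[of h q] by simp
    ultimately show "\<exists>h\<in>H. le3 h q" by blast
  qed
  ultimately show ?thesis by blast
qed

lemma pair_basis:
  fixes Q :: "('b multiset \<times> 'c multiset) set"
  assumes "finite B" "finite C"
    and "\<forall>q\<in>Q. set_mset (fst q) \<subseteq> B \<and> set_mset (snd q) \<subseteq> C"
  shows "\<exists>H. finite H \<and> H \<subseteq> Q \<and> (\<forall>q\<in>Q. \<exists>h\<in>H. fst h \<subseteq># fst q \<and> snd h \<subseteq># snd q)"
proof -
  define Q3 where "Q3 = (\<lambda>p. ({#}::unit multiset, p)) ` Q"
  have "\<forall>q\<in>Q3. set_mset (fst q) \<subseteq> {} \<and> set_mset (fst (snd q)) \<subseteq> B \<and> set_mset (snd (snd q)) \<subseteq> C"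
    using assms(3) unfolding Q3_def by auto
  then have "\<exists>H3. finite H3 \<and> H3 \<subseteq> Q3 \<and> (\<forall>q\<in>Q3. \<exists>h\<in>H3. le3 h q)"
    by (intro triple_basis[where A="{}", OF _ assms(1,2)]) auto
  then obtain H3 where H3: "finite H3" "H3 \<subseteq> Q3" "\<forall>q\<in>Q3. \<exists>h\<in>H3. le3 h q"
    by auto
  show ?thesis
  proof (intro exI[where x="snd ` H3"] conjI)
    show "finite (snd ` H3)" using H3(1) by simp
    show "snd ` H3 \<subseteq> Q" using H3(2) unfolding Q3_def by auto
    show "\<forall>q\<in>Q. \<exists>h\<in>snd ` H3. fst h \<subseteq># fst q \<and> snd h \<subseteq># snd q"
    proof
      fix q assume "q \<in> Q"
      then have "({#}::unit multiset, q) \<in> Q3" unfolding Q3_def by simp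
      then obtain h where "h \<in> H3" "le3 h ({#}, q)" using H3(3) by blast
      then show "\<exists>h\<in>snd ` H3. fst h \<subseteq># fst q \<and> snd h \<subseteq># snd q" unfolding le3_def by auto
    qed
  qed
qed

lemma sl_plus: "sl a (M + N) = sl a M + sl a N" unfolding sl_def by simp
lemma sl_empty: "sl a {#} = {#}" unfolding sl_def by simp

lemma sl_add: "sl a (add_mset p P) = (if fst p = a then add_mset (snd p) (sl a P) else sl a P)"
  unfolding sl_def by simp

lemma sl_pair: "sl b (image_mset (Pair a) x) = (if a = b then x else {#})"
proof (cases "a = b")
  case True
  then show ?thesis unfolding sl_def by (simp add: filter_mset_image_mset image_mset.compositionality o_def)
next
  case False
  then show ?thesis unfolding sl_def by (simp add: filter_mset_image_mset)
qed

lemma sl_sum: "sl b (\<Sum>a\<in>A. f a) = (\<Sum>a\<in>A. sl b (f a))"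
  by (induction A rule: infinite_finite_induct) (auto simp: sl_plus sl_empty)

lemma img_sum: "image_mset f (\<Sum>a\<in>A. g a) = (\<Sum>a\<in>A. image_mset f (g a))"
  by (induction A rule: infinite_finite_induct) auto

lemma summset_sum: "sum_mset (\<Sum>a\<in>A. g a) = (\<Sum>a\<in>A. sum_mset (g a))"
  by (induction A rule: infinite_finite_induct) auto

lemma filter_sum: "filter_mset P (\<Sum>a\<in>A. g a) = (\<Sum>a\<in>A. filter_mset P (g a))"
  by (induction A rule: infinite_finite_induct) auto

lemma sum_sub: "(\<forall>a\<in>A. X a \<subseteq># Y a) \<Longrightarrow> (\<Sum>a\<in>A. X a) \<subseteq># (\<Sum>a\<in>A. Y a)"
  by (induction A rule: infinite_finite_induct) (auto intro: mset_subset_eq_mono_add)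

lemma sl_decomp:
  assumes "finite A" "fst ` set_mset P \<subseteq> A"
  shows "P = (\<Sum>a\<in>A. image_mset (Pair a) (sl a P))"
  using assms(2)
proof (induction P)
  case empty
  then show ?case by (simp add: sl_empty)
next
  case (add p P)
  have fp: "fst p \<in> A" using add.prems by simp
  have IH: "P = (\<Sum>a\<in>A. image_mset (Pair a) (sl a P))" using add.IH add.prems by simp
  have "\<And>a. image_mset (Pair a) (sl a (add_mset p P)) = image_mset (Pair a) (sl a P) + (if fst p = a then {#p#} else {#})"
    by (cases p) (simp add: sl_add)
  then have "(\<Sum>a\<in>A. image_mset (Pair a) (sl a (add_mset p P))) = (\<Sum>a\<in>A. image_mset (Pair a) (sl a P)) + (\<Sum>a\<in>A. (if fst p = a then {#p#} else {#}))"
    by (simp add: sum.distrib)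
  also have "(\<Sum>a\<in>A. (if fst p = a then {#p#} else {#})) = {#p#}"
    using fp assms(1) by (simp add: sum.delta)
  finally show ?case using IH by simp
qed

lemma inter_rest: "M \<subseteq># X + Y \<Longrightarrow> M - (M \<inter># X) \<subseteq># Y"
  unfolding subseteq_mset_def by (simp add: min_def) (metis add.commute le_diff_conv)

lemma split_sub:
  assumes "finite A"
  shows "M \<subseteq># (\<Sum>a\<in>A. N a) \<Longrightarrow> \<exists>Ms. (\<forall>a\<in>A. Ms a \<subseteq># N a) \<and> M = (\<Sum>a\<in>A. Ms a)"
  using assms
proof (induction A arbitrary: M rule: finite_induct)
  case empty
  then show ?case by (intro exI[where x="\<lambda>_. {#}"]) simp
next
  case (insert b A)
  have "M \<subseteq># N b + (\<Sum>a\<in>A. N a)" using insert.prems insert.hyps by simp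
  then have rest: "M - (M \<inter># N b) \<subseteq># (\<Sum>a\<in>A. N a)" by (rule inter_rest)
  obtain Ms where Ms: "\<forall>a\<in>A. Ms a \<subseteq># N a" "M - (M \<inter># N b) = (\<Sum>a\<in>A. Ms a)"
    using insert.IH[OF rest] by blast
  define Ms' where "Ms' = Ms(b := M \<inter># N b)"
  have "(\<Sum>a\<in>A. Ms' a) = (\<Sum>a\<in>A. Ms a)" unfolding Ms'_def using insert.hyps(2) by (intro sum.cong) auto
  then have "(\<Sum>a\<in>insert b A. Ms' a) = (M \<inter># N b) + (M - (M \<inter># N b))"
    using insert.hyps Ms(2) unfolding Ms'_def by simp
  also have "\<dots> = M" by (meson subset_mset.add_diff_inverse subset_mset.inf_le1)
  finally have "M = (\<Sum>a\<in>insert b A. Ms' a)" by simp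
  moreover have "\<forall>a\<in>insert b A. Ms' a \<subseteq># N a" unfolding Ms'_def using Ms(1) insert.hyps(2) by auto
  ultimately show ?case by blast
qed

lemma sum_img_mono: "D' \<subseteq># D \<Longrightarrow> sum_mset (image_mset f D') \<subseteq># sum_mset (image_mset f D)"
proof -
  assume "D' \<subseteq># D"
  then have "D = D' + (D - D')" by (simp add: subset_mset.add_diff_inverse)
  then have "sum_mset (image_mset f D) = sum_mset (image_mset f D') + sum_mset (image_mset f (D - D'))"
    by (metis image_mset_union sum_mset.union)
  then show ?thesis by simp
qed

lemma elem_sum: "x \<in># M \<Longrightarrow> f x \<subseteq># sum_mset (image_mset f M)"
proof -
  assume "x \<in># M"
  then have "M = add_mset x (M - {#x#})" by simp
  then have "sum_mset (image_mset f M) = f x + sum_mset (image_mset f (M - {#x#}))"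
    by (metis image_mset_add_mset sum_mset.insert)
  then show ?thesis by simp
qed

context hs begin

lemma E_zero: "({#},{#}) \<in> E t" unfolding E_def by simp

lemma E_plus: "(a,b) \<in> E t \<Longrightarrow> (c,d) \<in> E t \<Longrightarrow> (a+c, b+d) \<in> E t"
  unfolding E_def by auto

lemma E_minus: "(a,b) \<in> E t \<Longrightarrow> (c,d) \<in> E t \<Longrightarrow> c \<subseteq># a \<Longrightarrow> d \<subseteq># b \<Longrightarrow> (a-c, b-d) \<in> E t"
  unfolding E_def by (auto simp: image_mset_Diff dest: in_diffD)

lemma E_sum: "set_mset D \<subseteq> E t \<Longrightarrow> (sum_mset (image_mset fst D), sum_mset (image_mset snd D)) \<in> E t"
proof (induction D)
  case empty then show ?case using E_zero by simp
next
  case (add x D)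
  then have "(fst x, snd x) \<in> E t" by simp
  moreover have "(sum_mset (image_mset fst D), sum_mset (image_mset snd D)) \<in> E t" using add by simp
  ultimately show ?case using E_plus by fastforce
qed

definition G :: "nat \<Rightarrow> ((nat \<Rightarrow> nat) multiset \<times> (nat \<Rightarrow> nat) multiset) set" where
  "G t = (SOME H. finite H \<and> H \<subseteq> E t - {({#},{#})} \<and>
      (\<forall>q\<in>E t - {({#},{#})}. \<exists>h\<in>H. fst h \<subseteq># fst q \<and> snd h \<subseteq># snd q))"

lemma G_prop: "finite (G t) \<and> G t \<subseteq> E t - {({#},{#})} \<and>
      (\<forall>q\<in>E t - {({#},{#})}. \<exists>h\<in>G t. fst h \<subseteq># fst q \<and> snd h \<subseteq># snd q)"
proof -
  have "\<exists>H. finite H \<and> H \<subseteq> E t - {({#},{#})} \<and>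
      (\<forall>q\<in>E t - {({#},{#})}. \<exists>h\<in>H. fst h \<subseteq># fst q \<and> snd h \<subseteq># snd q)"
    by (rule pair_basis[OF finite_CJ finite_CJ]) (auto simp: E_def)
  then show ?thesis unfolding G_def by (rule someI_ex)
qed

lemma decomp:
  "p \<in> E t \<Longrightarrow> \<exists>D. set_mset D \<subseteq> G t \<and> fst p = sum_mset (image_mset fst D) \<and> snd p = sum_mset (image_mset snd D)"
proof (induction "size (fst p) + size (snd p)" arbitrary: p rule: less_induct)
  case less
  show ?case
  proof (cases "p = ({#},{#})")
    case True
    then show ?thesis by (intro exI[where x="{#}"]) simp
  next
    case False
    then have "p \<in> E t - {({#},{#})}" using less.prems by simp
    then obtain h where h: "h \<in> G t" "fst h \<subseteq># fst p" "snd h \<subseteq># snd p" using G_prop by blast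
    have hE: "h \<in> E t" "h \<noteq> ({#},{#})" using h(1) G_prop by auto
    define p' where "p' = (fst p - fst h, snd p - snd h)"
    have p'E: "p' \<in> E t" unfolding p'_def using E_minus[of "fst p" "snd p" t "fst h" "snd h"] less.prems hE(1) h(2,3) by simp
    have "size (fst h) + size (snd h) > 0" using hE(2) by (cases h) (auto simp: nonempty_has_size)
    then have "size (fst p') + size (snd p') < size (fst p) + size (snd p)"
      unfolding p'_def using h(2,3) proof (simp add: size_Diff_submset)
      have "size (fst h) \<le> size (fst p)" "size (snd h) \<le> size (snd p)" using h(2,3) by (auto intro: size_mset_mono)
      then show "size (fst p) - size (fst h) + (size (snd p) - size (snd h)) < size (fst p) + size (snd p)"
        using \<open>size (fst h) + size (snd h) > 0\<close> by linarith
    qed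
    then obtain D where D: "set_mset D \<subseteq> G t" "fst p' = sum_mset (image_mset fst D)" "snd p' = sum_mset (image_mset snd D)"
      using less.hyps p'E by blast
    show ?thesis
    proof (intro exI[where x="add_mset h D"] conjI)
      show "set_mset (add_mset h D) \<subseteq> G t" using D(1) h(1) by simp
      show "fst p = sum_mset (image_mset fst (add_mset h D))"
        using D(2) h(2) unfolding p'_def by simp (metis subset_mset.add_diff_inverse)
      show "snd p = sum_mset (image_mset snd (add_mset h D))"
        using D(3) h(3) unfolding p'_def by simp (metis subset_mset.add_diff_inverse)
    qed
  qed
qed

end

lemma img_snd_sl:
  assumes "finite A" "fst ` set_mset P \<subseteq> A"
  shows "image_mset snd P = (\<Sum>a\<in>A. sl a P)"
proof -
  have "image_mset snd P = image_mset snd (\<Sum>a\<in>A. image_mset (Pair a) (sl a P))"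
    using sl_decomp[OF assms] by simp
  also have "\<dots> = (\<Sum>a\<in>A. sl a P)" by (simp add: img_sum image_mset.compositionality o_def)
  finally show ?thesis .
qed

lemma filter_pair: "filter_mset (\<lambda>x. fst x = t0) (image_mset (Pair t) M) = (if t = t0 then image_mset (Pair t) M else {#})"
  by (simp add: filter_mset_image_mset)

lemma sl_sum_pair:
  assumes "finite A"
  shows "sl b (\<Sum>a\<in>A. image_mset (Pair a) (x a)) = (if b \<in> A then x b else {#})"
proof -
  have "sl b (\<Sum>a\<in>A. image_mset (Pair a) (x a)) = (\<Sum>a\<in>A. (if a = b then x a else {#}))"
    by (simp add: sl_sum sl_pair)
  also have "\<dots> = (if b \<in> A then x b else {#})" using assms by (simp add: sum.delta')
  finally show ?thesis .
qed

lemma img_snd_sum_pair: "image_mset snd (\<Sum>a\<in>A. image_mset (Pair a) (x a)) = (\<Sum>a\<in>A. x a)"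
  by (simp add: img_sum image_mset.compositionality o_def)

context hs begin

definition tot1 :: "(nat \<times> ((nat \<Rightarrow> nat) multiset \<times> (nat \<Rightarrow> nat) multiset)) multiset \<Rightarrow> nat \<Rightarrow> (nat \<Rightarrow> nat) multiset" where
  "tot1 L t = sum_mset (image_mset (\<lambda>x. fst (snd x)) (filter_mset (\<lambda>x. fst x = t) L))"
definition tot2 :: "(nat \<times> ((nat \<Rightarrow> nat) multiset \<times> (nat \<Rightarrow> nat) multiset)) multiset \<Rightarrow> nat \<Rightarrow> (nat \<Rightarrow> nat) multiset" where
  "tot2 L t = sum_mset (image_mset (\<lambda>x. snd (snd x)) (filter_mset (\<lambda>x. fst x = t) L))"

definition Q2 where
  "Q2 = {q. set_mset (fst q) \<subseteq> Sigma T G \<and> (fst (snd q), snd (snd q)) \<in> E0 \<and>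
      (\<forall>t\<in>T. tot1 (fst q) t = fst (snd q) \<and> tot2 (fst q) t = snd (snd q)) \<and> q \<noteq> ({#},{#},{#})}"

definition H2 where
  "H2 = (SOME H. finite H \<and> H \<subseteq> Q2 \<and> (\<forall>q\<in>Q2. \<exists>h\<in>H. le3 h q))"

lemma H2_prop: "finite H2 \<and> H2 \<subseteq> Q2 \<and> (\<forall>q\<in>Q2. \<exists>h\<in>H2. le3 h q)"
proof -
  have fS: "finite (Sigma T G)" using finT G_prop by (intro finite_SigmaI) auto
  have "\<exists>H. finite H \<and> H \<subseteq> Q2 \<and> (\<forall>q\<in>Q2. \<exists>h\<in>H. le3 h q)"
    by (rule triple_basis[OF fS finite_CJ finite_CJ]) (auto simp: Q2_def E0_def)
  then show ?thesis unfolding H2_def by (rule someI_ex)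
qed

definition bound where "bound = Max ((\<lambda>q. size (fst (snd q)) + size (snd (snd q))) ` H2)"

lemma peel_prof:
  assumes UJ: "set_mset U \<subseteq> J" and VJ: "set_mset V \<subseteq> J" and mg: "marg U V" and ne: "U + V \<noteq> {#}"
  shows "\<exists>\<sigma> \<sigma>' \<alpha> \<beta>. \<sigma> \<subseteq># image_mset col U \<and> \<sigma>' \<subseteq># image_mset col V \<and> (\<sigma>,\<sigma>') \<in> E0 \<and>
     size \<sigma> + size \<sigma>' \<le> bound \<and> \<sigma> + \<sigma>' \<noteq> {#} \<and>
     (\<forall>t\<in>T. \<alpha> t \<subseteq># image_mset (key t) U \<and> \<beta> t \<subseteq># image_mset (key t) V \<and>
        image_mset snd (\<alpha> t) = \<sigma> \<and> image_mset snd (\<beta> t) = \<sigma>' \<and> (\<forall>a. (sl a (\<alpha> t), sl a (\<beta> t)) \<in> E t))"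
proof -
  define A where "A = (\<lambda>t. (\<lambda>i. i t) ` set_mset (U + V))"
  have finA: "\<And>t. finite (A t)" unfolding A_def by simp
  have fstU: "\<And>t. fst ` set_mset (image_mset (key t) U) \<subseteq> A t" unfolding A_def key_def by auto
  have fstV: "\<And>t. fst ` set_mset (image_mset (key t) V) \<subseteq> A t" unfolding A_def key_def by auto
  have ms: "(image_mset col U, image_mset col V) \<in> E0"
     "\<forall>t\<in>T. \<forall>a. (sl a (image_mset (key t) U), sl a (image_mset (key t) V)) \<in> E t"
    using mg marg_slices[OF UJ VJ] by auto
  define D where "D = (\<lambda>t a. SOME D. set_mset D \<subseteq> G t \<and> sl a (image_mset (key t) U) = sum_mset (image_mset fst D)
        \<and> sl a (image_mset (key t) V) = sum_mset (image_mset snd D))"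
  have Dp: "set_mset (D t a) \<subseteq> G t \<and> sl a (image_mset (key t) U) = sum_mset (image_mset fst (D t a))
        \<and> sl a (image_mset (key t) V) = sum_mset (image_mset snd (D t a))" if t: "t \<in> T" for t a
  proof -
    have "\<exists>D. set_mset D \<subseteq> G t \<and> sl a (image_mset (key t) U) = sum_mset (image_mset fst D)
        \<and> sl a (image_mset (key t) V) = sum_mset (image_mset snd D)"
      using decomp[of "(sl a (image_mset (key t) U), sl a (image_mset (key t) V))" t] ms(2) t by simp
    then show ?thesis unfolding D_def by (rule someI_ex)
  qed
  define L where "L = (\<Sum>t\<in>T. \<Sum>a\<in>A t. image_mset (Pair t) (D t a))"
  have filtL: "filter_mset (\<lambda>x. fst x = t0) L = (\<Sum>a\<in>A t0. image_mset (Pair t0) (D t0 a))" if t0: "t0 \<in> T" for t0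
  proof -
    have "filter_mset (\<lambda>x. fst x = t0) L = (\<Sum>t\<in>T. (if t = t0 then (\<Sum>a\<in>A t. image_mset (Pair t) (D t a)) else {#}))"
      unfolding L_def by (simp add: filter_sum filter_pair) (intro sum.cong refl, simp)
    also have "\<dots> = (\<Sum>a\<in>A t0. image_mset (Pair t0) (D t0 a))" using t0 finT by (simp add: sum.delta')
    finally show ?thesis .
  qed
  have totL: "tot1 L t = image_mset col U \<and> tot2 L t = image_mset col V" if t: "t \<in> T" for t
  proof -
    have "tot1 L t = (\<Sum>a\<in>A t. sum_mset (image_mset fst (D t a)))"
      unfolding tot1_def filtL[OF t] by (simp add: img_sum summset_sum image_mset.compositionality o_def)
    also have "\<dots> = (\<Sum>a\<in>A t. sl a (image_mset (key t) U))" using Dp[OF t] by simp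
    also have "\<dots> = image_mset snd (image_mset (key t) U)" using img_snd_sl[OF finA fstU] by simp
    also have "\<dots> = image_mset col U" by (simp add: image_mset.compositionality o_def key_def)
    finally have 1: "tot1 L t = image_mset col U" .
    have "tot2 L t = (\<Sum>a\<in>A t. sum_mset (image_mset snd (D t a)))"
      unfolding tot2_def filtL[OF t] by (simp add: img_sum summset_sum image_mset.compositionality o_def)
    also have "\<dots> = (\<Sum>a\<in>A t. sl a (image_mset (key t) V))" using Dp[OF t] by simp
    also have "\<dots> = image_mset snd (image_mset (key t) V)" using img_snd_sl[OF finA fstV] by simp
    also have "\<dots> = image_mset col V" by (simp add: image_mset.compositionality o_def key_def)
    finally show ?thesis using 1 by simp
  qed
  have setL: "set_mset L \<subseteq> Sigma T G"
  proof
    fix x assume "x \<in># L"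
    then obtain t a where ta: "t \<in> T" "a \<in> A t" "x \<in># image_mset (Pair t) (D t a)"
      unfolding L_def using finT finA by (auto simp: set_mset_sum)
    then show "x \<in> Sigma T G" using Dp[OF ta(1)] by auto
  qed
  have qQ: "(L, image_mset col U, image_mset col V) \<in> Q2"
    unfolding Q2_def using setL ms(1) totL ne by auto
  then obtain h where h: "h \<in> H2" "le3 h (L, image_mset col U, image_mset col V)" using H2_prop by blast
  obtain Lh \<sigma> \<sigma>' where hh: "h = (Lh, \<sigma>, \<sigma>')" by (cases h) auto
  have hQ: "h \<in> Q2" using h(1) H2_prop by auto
  have le: "Lh \<subseteq># L" "\<sigma> \<subseteq># image_mset col U" "\<sigma>' \<subseteq># image_mset col V" using h(2) hh unfolding le3_def by auto
  have splt: "\<exists>Ms. (\<forall>a\<in>A t. Ms a \<subseteq># image_mset (Pair t) (D t a)) \<and> filter_mset (\<lambda>x. fst x = t) Lh = (\<Sum>a\<in>A t. Ms a)"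
    if t: "t \<in> T" for t
  proof -
    have "filter_mset (\<lambda>x. fst x = t) Lh \<subseteq># filter_mset (\<lambda>x. fst x = t) L" using le(1) by (rule multiset_filter_mono)
    then have "filter_mset (\<lambda>x. fst x = t) Lh \<subseteq># (\<Sum>a\<in>A t. image_mset (Pair t) (D t a))" using filtL[OF t] by simp
    then show ?thesis by (rule split_sub[OF finA])
  qed
  define Mt where "Mt = (\<lambda>t. SOME Ms. (\<forall>a\<in>A t. Ms a \<subseteq># image_mset (Pair t) (D t a)) \<and> filter_mset (\<lambda>x. fst x = t) Lh = (\<Sum>a\<in>A t. Ms a))"
  have Mtp: "(\<forall>a\<in>A t. Mt t a \<subseteq># image_mset (Pair t) (D t a)) \<and> filter_mset (\<lambda>x. fst x = t) Lh = (\<Sum>a\<in>A t. Mt t a)"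
    if t: "t \<in> T" for t
    unfolding Mt_def using splt[OF t] by (rule someI_ex)
  define D' where "D' = (\<lambda>t a. image_mset snd (Mt t a))"
  have D'sub: "D' t a \<subseteq># D t a" if "t \<in> T" "a \<in> A t" for t a
  proof -
    have "D' t a \<subseteq># image_mset snd (image_mset (Pair t) (D t a))"
      unfolding D'_def using Mtp[OF that(1)] that(2) by (simp add: image_mset_subseteq_mono)
    then show ?thesis by (simp add: image_mset.compositionality o_def)
  qed
  have tot1h: "tot1 Lh t = (\<Sum>a\<in>A t. sum_mset (image_mset fst (D' t a)))" if t: "t \<in> T" for t
    unfolding tot1_def D'_def using Mtp[OF t] by (simp add: img_sum summset_sum image_mset.compositionality o_def)
  have tot2h: "tot2 Lh t = (\<Sum>a\<in>A t. sum_mset (image_mset snd (D' t a)))" if t: "t \<in> T" for t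
    unfolding tot2_def D'_def using Mtp[OF t] by (simp add: img_sum summset_sum image_mset.compositionality o_def)
  have hQ': "\<forall>t\<in>T. tot1 Lh t = \<sigma> \<and> tot2 Lh t = \<sigma>'" "(\<sigma>, \<sigma>') \<in> E0" "set_mset Lh \<subseteq> Sigma T G"
    "(Lh, \<sigma>, \<sigma>') \<noteq> ({#},{#},{#})"
    using hQ hh unfolding Q2_def by auto
  define \<alpha> where "\<alpha> = (\<lambda>t. \<Sum>a\<in>A t. image_mset (Pair a) (sum_mset (image_mset fst (D' t a))))"
  define \<beta> where "\<beta> = (\<lambda>t. \<Sum>a\<in>A t. image_mset (Pair a) (sum_mset (image_mset snd (D' t a))))"
  have props: "\<alpha> t \<subseteq># image_mset (key t) U \<and> \<beta> t \<subseteq># image_mset (key t) V \<and>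
        image_mset snd (\<alpha> t) = \<sigma> \<and> image_mset snd (\<beta> t) = \<sigma>' \<and> (\<forall>a. (sl a (\<alpha> t), sl a (\<beta> t)) \<in> E t)"
    if t: "t \<in> T" for t
  proof (intro conjI allI)
    have "image_mset (key t) U = (\<Sum>a\<in>A t. image_mset (Pair a) (sl a (image_mset (key t) U)))"
      by (rule sl_decomp[OF finA fstU])
    also have "\<dots> = (\<Sum>a\<in>A t. image_mset (Pair a) (sum_mset (image_mset fst (D t a))))" using Dp[OF t] by simp
    finally have eU: "image_mset (key t) U = (\<Sum>a\<in>A t. image_mset (Pair a) (sum_mset (image_mset fst (D t a))))" .
    show "\<alpha> t \<subseteq># image_mset (key t) U" unfolding eU \<alpha>_def
      by (intro sum_sub ballI image_mset_subseteq_mono sum_img_mono D'sub[OF t])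
    have "image_mset (key t) V = (\<Sum>a\<in>A t. image_mset (Pair a) (sl a (image_mset (key t) V)))"
      by (rule sl_decomp[OF finA fstV])
    also have "\<dots> = (\<Sum>a\<in>A t. image_mset (Pair a) (sum_mset (image_mset snd (D t a))))" using Dp[OF t] by simp
    finally have eV: "image_mset (key t) V = (\<Sum>a\<in>A t. image_mset (Pair a) (sum_mset (image_mset snd (D t a))))" .
    show "\<beta> t \<subseteq># image_mset (key t) V" unfolding eV \<beta>_def
      by (intro sum_sub ballI image_mset_subseteq_mono sum_img_mono D'sub[OF t])
    show "image_mset snd (\<alpha> t) = \<sigma>" unfolding \<alpha>_def img_snd_sum_pair using tot1h[OF t] hQ'(1) t by simp
    show "image_mset snd (\<beta> t) = \<sigma>'" unfolding \<beta>_def img_snd_sum_pair using tot2h[OF t] hQ'(1) t by simp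
  next
    fix a
    show "(sl a (\<alpha> t), sl a (\<beta> t)) \<in> E t"
    proof (cases "a \<in> A t")
      case True
      have "set_mset (D' t a) \<subseteq> E t" using D'sub[OF t True] Dp[OF t] G_prop
        by (meson Diff_subset mset_subset_eqD subset_iff)
      then show ?thesis unfolding \<alpha>_def \<beta>_def sl_sum_pair[OF finA] using True by (simp add: E_sum)
    next
      case False
      then show ?thesis unfolding \<alpha>_def \<beta>_def sl_sum_pair[OF finA] using E_zero by simp
    qed
  qed
  have bnd: "size \<sigma> + size \<sigma>' \<le> bound"
    unfolding bound_def using h(1) hh H2_prop by (intro Max_ge) force+
  have nz: "\<sigma> + \<sigma>' \<noteq> {#}"
  proof (cases "Lh = {#}")
    case True then show ?thesis using hQ'(4) by auto
  next
    case False
    then obtain x where x: "x \<in># Lh" by (meson multiset_nonemptyE)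
    then obtain t g where tg: "x = (t, g)" "t \<in> T" "g \<in> G t" using hQ'(3) by auto
    have gnz: "g \<noteq> ({#},{#})" using tg(3) G_prop by auto
    have xf: "x \<in># filter_mset (\<lambda>x. fst x = t) Lh" using x tg(1) by simp
    have "fst g \<subseteq># \<sigma>" using elem_sum[OF xf, of "\<lambda>x. fst (snd x)"] hQ'(1) tg unfolding tot1_def by auto
    moreover have "snd g \<subseteq># \<sigma>'" using elem_sum[OF xf, of "\<lambda>x. snd (snd x)"] hQ'(1) tg unfolding tot2_def by auto
    ultimately show ?thesis using gnz by (cases g) auto
  qed
  show ?thesis using le(2,3) hQ'(2) bnd nz props by blast
qed

end

context hs begin

lemma peel:
  assumes UJ: "set_mset U \<subseteq> J" and VJ: "set_mset V \<subseteq> J" and mg: "marg U V" and ne: "U + V \<noteq> {#}"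
  shows "\<exists>X Y U0 V0. peq U (X + U0) \<and> peq V (Y + V0) \<and> marg X Y \<and> size X + size Y \<le> bound \<and>
     X + Y \<noteq> {#} \<and> set_mset (X + U0) \<subseteq> J \<and> set_mset (Y + V0) \<subseteq> J"
proof -
  obtain \<sigma> \<sigma>' \<alpha> \<beta> where P: "\<sigma> \<subseteq># image_mset col U" "\<sigma>' \<subseteq># image_mset col V" "(\<sigma>,\<sigma>') \<in> E0"
     "size \<sigma> + size \<sigma>' \<le> bound" "\<sigma> + \<sigma>' \<noteq> {#}"
     "\<forall>t\<in>T. \<alpha> t \<subseteq># image_mset (key t) U \<and> \<beta> t \<subseteq># image_mset (key t) V \<and>
        image_mset snd (\<alpha> t) = \<sigma> \<and> image_mset snd (\<beta> t) = \<sigma>' \<and> (\<forall>a. (sl a (\<alpha> t), sl a (\<beta> t)) \<in> E t)"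
    using peel_prof[OF assms] by blast
  have labU: "\<forall>t\<in>T. \<forall>p\<in>#image_mset (key t) U. 1 \<le> fst p" using UJ J_lab unfolding key_def by auto
  have labV: "\<forall>t\<in>T. \<forall>p\<in>#image_mset (key t) V. 1 \<le> fst p" using VJ J_lab unfolding key_def by auto
  have cU: "set_mset (image_mset col U) \<subseteq> CJ" using set_col[OF UJ] .
  have cV: "set_mset (image_mset col V) \<subseteq> CJ" using set_col[OF VJ] .
  obtain X where X: "set_mset X \<subseteq> J" "image_mset col X = \<sigma>" "\<forall>t\<in>T. image_mset (key t) X = \<alpha> t"
  proof -
    have "\<exists>X. set_mset X \<subseteq> J \<and> image_mset col X = \<sigma> \<and> (\<forall>t\<in>T. image_mset (key t) X = \<alpha> t)"
    proof (rule realize)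
      show "\<forall>t\<in>T. image_mset snd (\<alpha> t) = \<sigma>" using P(6) by simp
      show "\<forall>t\<in>T. \<forall>p\<in>#\<alpha> t. 1 \<le> fst p" using P(6) labU by (meson mset_subset_eqD)
      show "set_mset \<sigma> \<subseteq> CJ" using P(1) cU by (meson mset_subset_eqD subset_iff)
    qed
    then show ?thesis using that by blast
  qed
  obtain Y where Y: "set_mset Y \<subseteq> J" "image_mset col Y = \<sigma>'" "\<forall>t\<in>T. image_mset (key t) Y = \<beta> t"
  proof -
    have "\<exists>Y. set_mset Y \<subseteq> J \<and> image_mset col Y = \<sigma>' \<and> (\<forall>t\<in>T. image_mset (key t) Y = \<beta> t)"
    proof (rule realize)
      show "\<forall>t\<in>T. image_mset snd (\<beta> t) = \<sigma>'" using P(6) by simp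
      show "\<forall>t\<in>T. \<forall>p\<in>#\<beta> t. 1 \<le> fst p" using P(6) labV by (meson mset_subset_eqD)
      show "set_mset \<sigma>' \<subseteq> CJ" using P(2) cV by (meson mset_subset_eqD subset_iff)
    qed
    then show ?thesis using that by blast
  qed
  obtain U0 where U0: "set_mset U0 \<subseteq> J" "image_mset col U0 = image_mset col U - \<sigma>"
      "\<forall>t\<in>T. image_mset (key t) U0 = image_mset (key t) U - \<alpha> t"
  proof -
    have "\<exists>X. set_mset X \<subseteq> J \<and> image_mset col X = image_mset col U - \<sigma> \<and> (\<forall>t\<in>T. image_mset (key t) X = image_mset (key t) U - \<alpha> t)"
    proof (rule realize)
      show "\<forall>t\<in>T. image_mset snd (image_mset (key t) U - \<alpha> t) = image_mset col U - \<sigma>"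
        using P(6) by (simp add: image_mset_Diff image_mset.compositionality o_def key_def)
      show "\<forall>t\<in>T. \<forall>p\<in>#image_mset (key t) U - \<alpha> t. 1 \<le> fst p" using labU by (meson in_diffD)
      show "set_mset (image_mset col U - \<sigma>) \<subseteq> CJ" using cU by (meson in_diffD subset_iff)
    qed
    then show ?thesis using that by blast
  qed
  obtain V0 where V0: "set_mset V0 \<subseteq> J" "image_mset col V0 = image_mset col V - \<sigma>'"
      "\<forall>t\<in>T. image_mset (key t) V0 = image_mset (key t) V - \<beta> t"
  proof -
    have "\<exists>X. set_mset X \<subseteq> J \<and> image_mset col X = image_mset col V - \<sigma>' \<and> (\<forall>t\<in>T. image_mset (key t) X = image_mset (key t) V - \<beta> t)"
    proof (rule realize)
      show "\<forall>t\<in>T. image_mset snd (image_mset (key t) V - \<beta> t) = image_mset col V - \<sigma>'"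
        using P(6) by (simp add: image_mset_Diff image_mset.compositionality o_def key_def)
      show "\<forall>t\<in>T. \<forall>p\<in>#image_mset (key t) V - \<beta> t. 1 \<le> fst p" using labV by (meson in_diffD)
      show "set_mset (image_mset col V - \<sigma>') \<subseteq> CJ" using cV by (meson in_diffD subset_iff)
    qed
    then show ?thesis using that by blast
  qed
  have p1: "peq U (X + U0)" unfolding peq_def
  proof (intro conjI ballI)
    show "image_mset col U = image_mset col (X + U0)" using X(2) U0(2) P(1)
      by (simp add: subset_mset.add_diff_inverse)
  next
    fix t assume t: "t \<in> T"
    show "image_mset (key t) U = image_mset (key t) (X + U0)" using X(3) U0(3) P(6) t
      by (simp add: subset_mset.add_diff_inverse)
  qed
  have p2: "peq V (Y + V0)" unfolding peq_def
  proof (intro conjI ballI)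
    show "image_mset col V = image_mset col (Y + V0)" using Y(2) V0(2) P(2)
      by (simp add: subset_mset.add_diff_inverse)
  next
    fix t assume t: "t \<in> T"
    show "image_mset (key t) V = image_mset (key t) (Y + V0)" using Y(3) V0(3) P(6) t
      by (simp add: subset_mset.add_diff_inverse)
  qed
  have mXY: "marg X Y"
    unfolding marg_slices[OF X(1) Y(1)] using X(2,3) Y(2,3) P(3,6) by simp
  have sz: "size X + size Y \<le> bound" using P(4) X(2) Y(2) by (metis size_image_mset)
  have nz: "X + Y \<noteq> {#}" using P(5) X(2) Y(2) by auto
  show ?thesis using p1 p2 mXY sz nz X(1) Y(1) U0(1) V0(1) by auto
qed

definition "bd = max 2 bound"

definition mv :: "(nat \<Rightarrow> nat) multiset \<Rightarrow> (nat \<Rightarrow> nat) multiset \<Rightarrow> bool" where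
  "mv U U' \<longleftrightarrow> set_mset U \<subseteq> J \<and> set_mset U' \<subseteq> J \<and>
     (\<exists>X Y Z. U = X + Z \<and> U' = Y + Z \<and> marg X Y \<and> size X \<le> bd \<and> size Y \<le> bd)"

lemma sw_mv: "sw U U' \<Longrightarrow> mv U U'"
proof -
  assume s: "sw U U'"
  then obtain y z t Z where h: "U = {#y, z#} + Z" "U' = {#y(t := z t), z(t := y t)#} + Z"
      "t \<in> T" "col y = col z" "set_mset U \<subseteq> J" unfolding sw_def by blast
  have "sw {#y, z#} {#y(t := z t), z(t := y t)#}"
    unfolding sw_def
    by (rule exI[where x=y], rule exI[where x=z], rule exI[where x=t], rule exI[where x="{#}"]) (use h in simp)
  then have mg: "marg {#y, z#} {#y(t := z t), z(t := y t)#}" by (intro peq_marg sw_peq)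
  have ex: "\<exists>X Y Z'. U = X + Z' \<and> U' = Y + Z' \<and> marg X Y \<and> size X \<le> bd \<and> size Y \<le> bd"
    by (rule exI[where x="{#y,z#}"], rule exI[where x="{#y(t := z t), z(t := y t)#}"], rule exI[where x=Z])
      (use h mg in \<open>simp add: bd_def\<close>)
  show ?thesis unfolding mv_def using ex h(5) sw_J[OF s] by blast
qed

lemma mv_sym: "mv U U' \<Longrightarrow> mv U' U"
  unfolding mv_def using marg_sym by blast

lemma mv_add: "mv U U' \<Longrightarrow> set_mset W \<subseteq> J \<Longrightarrow> mv (U + W) (U' + W)"
  unfolding mv_def by (metis (no_types, lifting) set_mset_union Un_subset_iff union_assoc)

lemma mvs_add: "mv\<^sup>*\<^sup>* U U' \<Longrightarrow> set_mset W \<subseteq> J \<Longrightarrow> mv\<^sup>*\<^sup>* (U + W) (U' + W)"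
proof (induction rule: rtranclp_induct)
  case base then show ?case by simp
next
  case (step y z)
  then show ?case using mv_add by (meson rtranclp.rtrancl_into_rtrancl)
qed

lemma sws_mvs: "sw\<^sup>*\<^sup>* U U' \<Longrightarrow> mv\<^sup>*\<^sup>* U U'"
  by (induction rule: rtranclp_induct) (auto intro: sw_mv rtranclp.rtrancl_into_rtrancl)

lemma conn:
  "marg U V \<Longrightarrow> set_mset U \<subseteq> J \<Longrightarrow> set_mset V \<subseteq> J \<Longrightarrow> mv\<^sup>*\<^sup>* U V"
proof (induction "size U + size V" arbitrary: U V rule: less_induct)
  case less
  show ?case
  proof (cases "U + V = {#}")
    case True then show ?thesis by simp
  next
    case False
    obtain X Y U0 V0 where P: "peq U (X + U0)" "peq V (Y + V0)" "marg X Y" "size X + size Y \<le> bound"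
      "X + Y \<noteq> {#}" "set_mset (X + U0) \<subseteq> J" "set_mset (Y + V0) \<subseteq> J"
      using peel[OF less.prems(2,3,1) False] by blast
    have "marg (X + U0) (Y + V0)"
      using marg_trans[OF marg_trans[OF marg_sym[OF peq_marg[OF P(1)]] less.prems(1)] peq_marg[OF P(2)]] .
    then have m0: "marg U0 V0" using marg_cancel2 P(3) by blast
    have szU: "size U = size X + size U0" using P(1) unfolding peq_def by (metis size_image_mset size_union)
    have szV: "size V = size Y + size V0" using P(2) unfolding peq_def by (metis size_image_mset size_union)
    have "size X + size Y > 0" using P(5) by (simp add: nonempty_has_size)
    then have "size U0 + size V0 < size U + size V" using szU szV by simp
    moreover have "set_mset U0 \<subseteq> J" "set_mset V0 \<subseteq> J" using P(6,7) by auto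
    ultimately have IH: "mv\<^sup>*\<^sup>* U0 V0" using less.hyps m0 by blast
    have s1: "mv\<^sup>*\<^sup>* U (X + U0)" using swap_conn[OF P(1) less.prems(2) P(6)] by (rule sws_mvs)
    have ex: "\<exists>X' Y' Z'. X + U0 = X' + Z' \<and> Y + U0 = Y' + Z' \<and> marg X' Y' \<and> size X' \<le> bd \<and> size Y' \<le> bd"
      by (rule exI[where x=X], rule exI[where x=Y], rule exI[where x=U0]) (use P(3,4) in \<open>simp add: bd_def le_max_iff_disj\<close>)
    have "set_mset (Y + U0) \<subseteq> J" using P(6,7) by auto
    then have s2: "mv (X + U0) (Y + U0)" unfolding mv_def using ex P(6) by blast
    have s3: "mv\<^sup>*\<^sup>* (U0 + Y) (V0 + Y)" using mvs_add[OF IH] P(7) by auto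
    have s4: "mv\<^sup>*\<^sup>* (Y + V0) V" using swap_conn[OF peq_sym[OF P(2)] P(7) less.prems(3)] by (rule sws_mvs)
    have "mv\<^sup>*\<^sup>* U (Y + U0)" using s1 s2 by (rule rtranclp.rtrancl_into_rtrancl)
    also have "mv\<^sup>*\<^sup>* (Y + U0) (Y + V0)" using s3 by (simp add: add.commute)
    finally show ?thesis using s4 by simp
  qed
qed

end

lemma card_set_mset_le: "card (set_mset M) \<le> size M"
proof -
  obtain xs where "mset xs = M" using ex_mset by blast
  then show ?thesis using card_length by fastforce
qed

lemma finite_bounded_msets:
  assumes "finite A"
  shows "finite {M. set_mset M \<subseteq> A \<and> size M \<le> k}"
proof -
  have "{M. set_mset M \<subseteq> A \<and> size M \<le> k} \<subseteq> mset ` {xs. set xs \<subseteq> A \<and> length xs \<le> k}"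
  proof
    fix M assume M: "M \<in> {M. set_mset M \<subseteq> A \<and> size M \<le> k}"
    obtain xs where xs: "mset xs = M" using ex_mset by blast
    then show "M \<in> mset ` {xs. set xs \<subseteq> A \<and> length xs \<le> k}" using M by auto
  qed
  moreover have "finite (mset ` {xs. set xs \<subseteq> A \<and> length xs \<le> k})"
    using finite_lists_length_le[OF assms] by simp
  ultimately show ?thesis using finite_subset by blast
qed

lemma relabel:
  fixes L :: "nat set"
  assumes fL: "finite L" and L0: "0 \<notin> L" and cL: "card L \<le> N"
  shows "\<exists>\<tau>. \<tau> \<in> Sym \<and> \<tau> ` L \<subseteq> {1..N}"
proof -
  define L1 where "L1 = L - {1..N}"
  define F where "F = {1..N} - L"
  have fL1: "finite L1" "finite F" unfolding L1_def F_def using fL by auto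
  have "card L = card (L \<inter> {1..N}) + card L1"
    unfolding L1_def using fL by (rule card_Int_Diff)
  moreover have "card F = N - card (L \<inter> {1..N})"
  proof -
    have "card F = card {1..N} - card ({1..N} \<inter> L)" unfolding F_def by (rule card_Diff_subset_Int) simp
    then show ?thesis by (simp add: Int_commute)
  qed
  ultimately have "card L1 \<le> card F" using cL by linarith
  then obtain f where f: "f ` L1 \<subseteq> F" "inj_on f L1" using card_le_inj[OF fL1] by blast
  define g where "g = the_inv_into L1 f"
  define \<tau> where "\<tau> = (\<lambda>n. if n \<in> L1 then f n else if n \<in> f ` L1 then g n else n)"
  have disj: "L1 \<inter> F = {}" unfolding L1_def F_def by auto
  have inv: "\<tau> (\<tau> n) = n" for n
  proof (cases "n \<in> L1")
    case True
    then have "f n \<notin> L1" using f(1) disj by auto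
    moreover have "g (f n) = n" unfolding g_def using True f(2) by (simp add: the_inv_into_f_f)
    ultimately show ?thesis unfolding \<tau>_def using True by simp
  next
    case False
    show ?thesis
    proof (cases "n \<in> f ` L1")
      case True
      then have gn: "g n \<in> L1" "f (g n) = n" unfolding g_def using f(2)
        by (auto simp: the_inv_into_into f_the_inv_into_f)
      then show ?thesis unfolding \<tau>_def using False True by simp
    next
      case False2: False
      then show ?thesis unfolding \<tau>_def using False by simp
    qed
  qed
  have "inj \<tau>"
  proof (rule injI)
    fix x y assume "\<tau> x = \<tau> y"
    then have "\<tau> (\<tau> x) = \<tau> (\<tau> y)" by simp
    then show "x = y" using inv by simp
  qed
  moreover have "surj \<tau>"
  proof (rule surjI)
    fix x show "\<tau> (\<tau> x) = x" by (rule inv)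
  qed
  ultimately have "bij \<tau>" by (simp add: bij_def)
  moreover have "\<tau> 0 = 0"
  proof -
    have "0 \<notin> L1" using L0 unfolding L1_def by simp
    moreover have "0 \<notin> f ` L1" using f(1) unfolding F_def by auto
    ultimately show ?thesis unfolding \<tau>_def by simp
  qed
  moreover have "finite {n. \<tau> n \<noteq> n}"
  proof (rule finite_subset)
    show "{n. \<tau> n \<noteq> n} \<subseteq> L1 \<union> f ` L1" unfolding \<tau>_def by auto
    show "finite (L1 \<union> f ` L1)" using fL1 by simp
  qed
  moreover have "\<tau> ` L \<subseteq> {1..N}"
  proof
    fix y assume "y \<in> \<tau> ` L"
    then obtain n where n: "n \<in> L" "y = \<tau> n" by blast
    show "y \<in> {1..N}"
    proof (cases "n \<in> L1")
      case True then show ?thesis using n f(1) unfolding \<tau>_def F_def by auto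
    next
      case False
      then have "n \<in> {1..N}" using n(1) unfolding L1_def by simp
      moreover have "n \<notin> f ` L1" using f(1) n(1) unfolding F_def by auto
      ultimately show ?thesis using n False unfolding \<tau>_def by simp
    qed
  qed
  ultimately have "\<tau> \<in> Sym \<and> \<tau> ` L \<subseteq> {1..N}" unfolding Sym_def by simp
  then show ?thesis by (rule exI[where x=\<tau>])
qed

lemma act_inv: "bij \<sigma> \<Longrightarrow> act_idx T (inv \<sigma>) (act_idx T \<sigma> i) = i"
  unfolding act_idx_def by (rule ext) (simp add: bij_is_inj)

lemma Sym_inv: "\<sigma> \<in> Sym \<Longrightarrow> inv \<sigma> \<in> Sym"
proof -
  assume s: "\<sigma> \<in> Sym"
  then have b: "bij \<sigma>" "\<sigma> 0 = 0" "finite {n. \<sigma> n \<noteq> n}" unfolding Sym_def by auto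
  have bi: "bij (inv \<sigma>)" using b(1) by (simp add: bij_imp_bij_inv)
  have "inv \<sigma> (\<sigma> 0) = 0" by (rule inv_f_f[OF bij_is_inj[OF b(1)]])
  then have i0: "inv \<sigma> 0 = 0" using b(2) by simp
  have "{n. inv \<sigma> n \<noteq> n} \<subseteq> \<sigma> ` {n. \<sigma> n \<noteq> n}"
  proof
    fix n assume "n \<in> {n. inv \<sigma> n \<noteq> n}"
    then have ne: "inv \<sigma> n \<noteq> n" by simp
    have sn: "\<sigma> (inv \<sigma> n) = n" by (rule surj_f_inv_f[OF bij_is_surj[OF b(1)]])
    show "n \<in> \<sigma> ` {n. \<sigma> n \<noteq> n}"
    proof (rule image_eqI[where x="inv \<sigma> n"])
      show "n = \<sigma> (inv \<sigma> n)" using sn by simp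
      show "inv \<sigma> n \<in> {n. \<sigma> n \<noteq> n}" using sn ne by simp
    qed
  qed
  then have "finite {n. inv \<sigma> n \<noteq> n}" using b(3) finite_subset finite_imageI by blast
  then show ?thesis unfolding Sym_def using bi i0 by simp
qed

lemma Sym_pos: "\<sigma> \<in> Sym \<Longrightarrow> n \<noteq> 0 \<Longrightarrow> \<sigma> n \<noteq> 0"
proof
  assume s: "\<sigma> \<in> Sym" and n: "n \<noteq> 0" and z: "\<sigma> n = 0"
  have b: "bij \<sigma>" "\<sigma> 0 = 0" using s unfolding Sym_def by auto
  then have "\<sigma> n = \<sigma> 0" using z by simp
  then have "n = 0" by (rule injD[OF bij_is_inj[OF b(1)]])
  then show False using n by simp
qed

lemma restr_act: "\<sigma> 0 = 0 \<Longrightarrow> restr F (act_idx T \<sigma> i) = act_idx T \<sigma> (restr F i)"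
  unfolding restr_def act_idx_def by (rule ext) auto

context hs begin

lemma marg_act: "\<sigma> 0 = 0 \<Longrightarrow> marg X Y \<Longrightarrow> marg (image_mset (act_idx T \<sigma>) X) (image_mset (act_idx T \<sigma>) Y)"
proof -
  assume s0: "\<sigma> 0 = 0" and mg: "marg X Y"
  have c: "\<And>F W. image_mset (restr F) (image_mset (act_idx T \<sigma>) W) = image_mset (act_idx T \<sigma>) (image_mset (restr F) W)"
    by (simp add: image_mset.compositionality o_def restr_act[where \<sigma>=\<sigma>, OF s0])
  show ?thesis using mg unfolding marg_def c by simp
qed

lemma J_act: "\<sigma> \<in> Sym \<Longrightarrow> i \<in> J \<Longrightarrow> act_idx T \<sigma> i \<in> J"
proof -
  assume s: "\<sigma> \<in> Sym" and i: "i \<in> J"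
  have pos: "\<And>t. t \<in> T \<Longrightarrow> 1 \<le> \<sigma> (i t)"
  proof -
    fix t assume t: "t \<in> T"
    have "i t \<noteq> 0" using J_lab[OF i t] by simp
    then have "\<sigma> (i t) \<noteq> 0" by (rule Sym_pos[OF s])
    then show "1 \<le> \<sigma> (i t)" by simp
  qed
  have i': "(\<forall>j. j \<notin> {1..m} \<longrightarrow> i j = 0) \<and>
      (\<forall>j \<in> {1..m}. (j \<in> T \<longrightarrow> 1 \<le> i j) \<and> (j \<notin> T \<longrightarrow> 1 \<le> i j \<and> i j \<le> r j))"
    using i unfolding J_def idx_set_def by simp
  show ?thesis unfolding J_def idx_set_def
  proof (intro CollectI conjI allI ballI impI)
    fix j assume j: "j \<notin> {1..m}"
    then have "j \<notin> T" using T_sub by auto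
    then show "act_idx T \<sigma> i j = 0" using i' j unfolding act_idx_def by simp
  next
    fix j assume "j \<in> {1..m}" "j \<in> T"
    then show "1 \<le> act_idx T \<sigma> i j" using pos unfolding act_idx_def by simp
  next
    fix j assume "j \<in> {1..m}" "j \<notin> T"
    then show "1 \<le> act_idx T \<sigma> i j" "act_idx T \<sigma> i j \<le> r j" using i' unfolding act_idx_def by auto
  qed
qed

definition "NN = card T * (2 * bd)"
definition "JN = {i \<in> J. \<forall>t\<in>T. i t \<le> NN}"
definition "B0 = {(X,Y). marg X Y \<and> set_mset X \<subseteq> JN \<and> set_mset Y \<subseteq> JN \<and> size X \<le> bd \<and> size Y \<le> bd}"

definition stepB :: "(nat \<Rightarrow> nat) multiset \<Rightarrow> (nat \<Rightarrow> nat) multiset \<Rightarrow> bool" where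
  "stepB U U' \<longleftrightarrow> set_mset U \<subseteq> J \<and> set_mset U' \<subseteq> J \<and>
     (\<exists>\<sigma>\<in>Sym. \<exists>X Y Z. (X,Y) \<in> B0 \<and> U = image_mset (act_idx T \<sigma>) X + Z \<and> U' = image_mset (act_idx T \<sigma>) Y + Z)"

lemma finite_JN: "finite JN"
proof -
  define b where "b = max NN (Max (r ` {1..m}))"
  have "JN \<subseteq> {f. \<forall>x. (x \<in> {1..m} \<longrightarrow> f x \<in> {0..b}) \<and> (x \<notin> {1..m} \<longrightarrow> f x = 0)}"
  proof
    fix i assume "i \<in> JN"
    then have i: "i \<in> J" "\<forall>t\<in>T. i t \<le> NN" unfolding JN_def by auto
    show "i \<in> {f. \<forall>x. (x \<in> {1..m} \<longrightarrow> f x \<in> {0..b}) \<and> (x \<notin> {1..m} \<longrightarrow> f x = 0)}"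
    proof (intro CollectI allI conjI impI)
      fix x assume x: "x \<in> {1..m}"
      show "i x \<in> {0..b}"
      proof (cases "x \<in> T")
        case True then show ?thesis using i(2) unfolding b_def by fastforce
      next
        case False
        then have "i x \<le> r x" using i(1) x unfolding J_def idx_set_def by auto
        also have "r x \<le> Max (r ` {1..m})" using x by (intro Max_ge) auto
        finally show ?thesis unfolding b_def by simp
      qed
    next
      fix x assume "x \<notin> {1..m}"
      then show "i x = 0" using i(1) unfolding J_def idx_set_def by auto
    qed
  qed
  moreover have "finite {f. \<forall>x. (x \<in> {1..m} \<longrightarrow> f x \<in> {0..b}) \<and> (x \<notin> {1..m} \<longrightarrow> f x = (0::nat))}"
    by (rule finite_set_of_finite_funs) auto
  ultimately show ?thesis using finite_subset by blast
qed

lemma finite_B0: "finite B0"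
proof -
  have "B0 \<subseteq> {M. set_mset M \<subseteq> JN \<and> size M \<le> bd} \<times> {M. set_mset M \<subseteq> JN \<and> size M \<le> bd}"
    unfolding B0_def by auto
  moreover have "finite ({M. set_mset M \<subseteq> JN \<and> size M \<le> bd} \<times> {M. set_mset M \<subseteq> JN \<and> size M \<le> bd})"
    using finite_bounded_msets[OF finite_JN] by simp
  ultimately show ?thesis using finite_subset by blast
qed

lemma mv_stepB: "mv U U' \<Longrightarrow> stepB U U'"
proof -
  assume "mv U U'"
  then obtain X Y Z where h: "set_mset U \<subseteq> J" "set_mset U' \<subseteq> J" "U = X + Z" "U' = Y + Z" "marg X Y"
    "size X \<le> bd" "size Y \<le> bd" unfolding mv_def by blast
  have XJ: "set_mset X \<subseteq> J" "set_mset Y \<subseteq> J" using h(1-4) by auto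
  define L where "L = (\<lambda>p. fst p (snd p)) ` ((set_mset X \<union> set_mset Y) \<times> T)"
  have fL: "finite L" unfolding L_def using finT by simp
  have "card L \<le> card ((set_mset X \<union> set_mset Y) \<times> T)" unfolding L_def by (rule card_image_le) (simp add: finT)
  also have "\<dots> = card (set_mset X \<union> set_mset Y) * card T" by (simp add: card_cartesian_product)
  also have "\<dots> \<le> (size X + size Y) * card T"
  proof (rule mult_right_mono)
    have "card (set_mset X \<union> set_mset Y) \<le> card (set_mset X) + card (set_mset Y)" by (rule card_Un_le)
    also have "\<dots> \<le> size X + size Y" using card_set_mset_le by (metis add_mono)
    finally show "card (set_mset X \<union> set_mset Y) \<le> size X + size Y" .
  qed simp
  also have "\<dots> \<le> NN" unfolding NN_def using h(6,7) by (simp add: mult.commute)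
  finally have cL: "card L \<le> NN" .
  have L0: "0 \<notin> L" unfolding L_def using XJ J_lab by fastforce
  obtain \<tau> where tau: "\<tau> \<in> Sym" "\<tau> ` L \<subseteq> {1..NN}" using relabel[OF fL L0 cL] by blast
  have tb: "bij \<tau>" "\<tau> 0 = 0" using tau(1) unfolding Sym_def by auto
  define X0 where "X0 = image_mset (act_idx T \<tau>) X"
  define Y0 where "Y0 = image_mset (act_idx T \<tau>) Y"
  have inJN: "act_idx T \<tau> i \<in> JN" if "i \<in> set_mset X \<union> set_mset Y" for i
  proof -
    have "i \<in> J" using that XJ by auto
    moreover have "\<forall>t\<in>T. \<tau> (i t) \<le> NN"
    proof
      fix t assume "t \<in> T"
      then have "i t \<in> L" unfolding L_def using that by force
      then show "\<tau> (i t) \<le> NN" using tau(2) by auto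
    qed
    ultimately show ?thesis unfolding JN_def using J_act[OF tau(1)] unfolding act_idx_def by auto
  qed
  have B: "(X0, Y0) \<in> B0" unfolding B0_def X0_def Y0_def
    using marg_act[where \<sigma>=\<tau>, OF tb(2) h(5)] inJN h(6,7) by auto
  have bk: "\<And>W. image_mset (act_idx T (inv \<tau>)) (image_mset (act_idx T \<tau>) W) = W"
    by (simp add: image_mset.compositionality o_def act_inv[OF tb(1)])
  have e1: "U = image_mset (act_idx T (inv \<tau>)) X0 + Z" unfolding X0_def bk using h(3) .
  have e2: "U' = image_mset (act_idx T (inv \<tau>)) Y0 + Z" unfolding Y0_def bk using h(4) .
  have ex: "\<exists>X' Y' Z'. (X',Y') \<in> B0 \<and> U = image_mset (act_idx T (inv \<tau>)) X' + Z' \<and> U' = image_mset (act_idx T (inv \<tau>)) Y' + Z'"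
    using B e1 e2 by blast
  show "stepB U U'" unfolding stepB_def using h(1,2) Sym_inv[OF tau(1)] ex by blast
qed

lemma stepB_conn: "marg U V \<Longrightarrow> set_mset U \<subseteq> J \<Longrightarrow> set_mset V \<subseteq> J \<Longrightarrow> stepB\<^sup>*\<^sup>* U V"
proof -
  assume a: "marg U V" "set_mset U \<subseteq> J" "set_mset V \<subseteq> J"
  have "mv\<^sup>*\<^sup>* U V" using conn[OF a] .
  then show "stepB\<^sup>*\<^sup>* U V"
    by (induction rule: rtranclp_induct) (auto intro: mv_stepB rtranclp.rtrancl_into_rtrancl)
qed

end

definition vec :: "'a multiset \<Rightarrow> 'a \<Rightarrow> int" where "vec M = (\<lambda>i. int (count M i))"
definition ms :: "('a \<Rightarrow> int) \<Rightarrow> 'a multiset" where "ms u = Abs_multiset (\<lambda>i. nat (u i))"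
definition push :: "('a \<Rightarrow> 'b) \<Rightarrow> ('a \<Rightarrow> int) \<Rightarrow> 'b \<Rightarrow> int" where
  "push f u = (\<lambda>y. \<Sum>i \<in> {i. u i \<noteq> 0 \<and> f i = y}. u i)"

lemma mu_comp_push: "mu_comp F u = push (restr F) u"
  unfolding mu_comp_def push_def by simp

lemma act_vec_push: "act_vec T \<sigma> u = push (act_idx T \<sigma>) u"
  unfolding act_vec_def push_def by simp

lemma count_img_sum:
  assumes "finite S" "set_mset X \<inter> f -` {y} \<subseteq> S" "S \<subseteq> f -` {y}"
  shows "int (count (image_mset f X) y) = (\<Sum>i\<in>S. int (count X i))"
proof -
  have "count (image_mset f X) y = (\<Sum>i\<in>f -` {y} \<inter> set_mset X. count X i)" by (rule count_image_mset)
  also have "\<dots> = (\<Sum>i\<in>S. count X i)"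
    using assms by (intro sum.mono_neutral_left) auto
  finally show ?thesis by simp
qed

lemma push_vec: "push f (vec X - vec Y) = vec (image_mset f X) - vec (image_mset f Y)"
proof (rule ext)
  fix y
  define d where "d = vec X - vec Y"
  define S where "S = (set_mset X \<union> set_mset Y) \<inter> f -` {y}"
  have fS: "finite S" unfolding S_def by simp
  have "{i. d i \<noteq> 0 \<and> f i = y} \<subseteq> S"
  proof
    fix i assume "i \<in> {i. d i \<noteq> 0 \<and> f i = y}"
    then have "count X i \<noteq> count Y i" "f i = y" unfolding d_def vec_def by auto
    moreover have "i \<in># X \<or> i \<in># Y" using calculation(1) by (metis count_eq_zero_iff)
    ultimately show "i \<in> S" unfolding S_def by auto
  qed
  then have "(\<Sum>i \<in> {i. d i \<noteq> 0 \<and> f i = y}. d i) = (\<Sum>i\<in>S. d i)"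
    using fS by (intro sum.mono_neutral_left) (auto simp: S_def)
  also have "\<dots> = (\<Sum>i\<in>S. int (count X i)) - (\<Sum>i\<in>S. int (count Y i))"
    unfolding d_def vec_def by (simp add: sum_subtractf)
  also have "\<dots> = int (count (image_mset f X) y) - int (count (image_mset f Y) y)"
  proof -
    have "set_mset X \<inter> f -` {y} \<subseteq> S" "set_mset Y \<inter> f -` {y} \<subseteq> S" "S \<subseteq> f -` {y}" unfolding S_def by auto
    then show ?thesis using count_img_sum[OF fS, of X f y] count_img_sum[OF fS, of Y f y] by simp
  qed
  finally show "push f (vec X - vec Y) y = (vec (image_mset f X) - vec (image_mset f Y)) y"
    unfolding push_def d_def vec_def by simp
qed

lemma vec_eq_iff: "vec A = vec B \<longleftrightarrow> A = B"
  unfolding vec_def by (metis multiset_eqI of_nat_eq_iff)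

lemma vec_fin: "set_mset X \<subseteq> J \<Longrightarrow> vec X \<in> nonneg_vecs J"
  unfolding nonneg_vecs_def fin_vecs_def vec_def by auto

lemma vec_diff_fin: "set_mset X \<subseteq> J \<Longrightarrow> set_mset Y \<subseteq> J \<Longrightarrow> vec X - vec Y \<in> fin_vecs J"
proof -
  assume a: "set_mset X \<subseteq> J" "set_mset Y \<subseteq> J"
  have "{i. (vec X - vec Y) i \<noteq> 0} \<subseteq> set_mset X \<union> set_mset Y"
  proof
    fix i assume "i \<in> {i. (vec X - vec Y) i \<noteq> 0}"
    then have "count X i \<noteq> count Y i" unfolding vec_def by auto
    then show "i \<in> set_mset X \<union> set_mset Y" by (metis Un_iff count_eq_zero_iff)
  qed
  then have "finite {i. (vec X - vec Y) i \<noteq> 0}" by (rule finite_subset) simp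
  moreover have "\<forall>i. (vec X - vec Y) i \<noteq> 0 \<longrightarrow> i \<in> J" using \<open>{i. (vec X - vec Y) i \<noteq> 0} \<subseteq> set_mset X \<union> set_mset Y\<close> a by auto
  ultimately show ?thesis unfolding fin_vecs_def by simp
qed

lemma ms_vec:
  assumes "u \<in> nonneg_vecs J"
  shows "vec (ms u) = u" "set_mset (ms u) \<subseteq> J"
proof -
  have fin: "finite {i. u i \<noteq> 0}" and pos: "\<forall>i. u i \<ge> 0" and sup: "\<forall>i. u i \<noteq> 0 \<longrightarrow> i \<in> J"
    using assms unfolding nonneg_vecs_def fin_vecs_def by auto
  have "(\<lambda>i. nat (u i)) \<in> {f. finite {x. 0 < f x}}"
    using fin by (auto elim: finite_subset[rotated])
  then have c: "count (ms u) = (\<lambda>i. nat (u i))" unfolding ms_def by (simp add: Abs_multiset_inverse)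
  show "vec (ms u) = u" unfolding vec_def c using pos by (simp add: fun_eq_iff)
  show "set_mset (ms u) \<subseteq> J" using sup c by (auto simp: set_mset_def)
qed

context hs begin

lemma ker_iff: "set_mset X \<subseteq> J \<Longrightarrow> set_mset Y \<subseteq> J \<Longrightarrow> (vec X - vec Y \<in> ker_mu m Fs T r \<longleftrightarrow> marg X Y)"
proof -
  assume a: "set_mset X \<subseteq> J" "set_mset Y \<subseteq> J"
  have "vec X - vec Y \<in> fin_vecs (idx_set m T r)" using vec_diff_fin[OF a] unfolding J_def .
  then have "vec X - vec Y \<in> ker_mu m Fs T r \<longleftrightarrow>
       (\<forall>k<length Fs. vec (image_mset (restr (Fs!k)) X) - vec (image_mset (restr (Fs!k)) Y) = (\<lambda>_. 0))"
    unfolding ker_mu_def by (simp add: mu_comp_push push_vec)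
  also have "\<dots> \<longleftrightarrow> marg X Y"
  proof -
    have "\<And>A B :: (nat \<Rightarrow> nat) multiset. (vec A - vec B = (\<lambda>_. 0)) \<longleftrightarrow> A = B"
    proof -
      fix A B :: "(nat \<Rightarrow> nat) multiset"
      have "(vec A - vec B = (\<lambda>_. 0)) \<longleftrightarrow> vec A = vec B" by (simp add: fun_eq_iff)
      then show "(vec A - vec B = (\<lambda>_. 0)) \<longleftrightarrow> A = B" using vec_eq_iff by simp
    qed
    then show ?thesis unfolding marg_def by simp
  qed
  finally show ?thesis .
qed

lemma stepB_marg: "stepB V1 V2 \<Longrightarrow> marg V1 V2"
proof -
  assume "stepB V1 V2"
  then obtain \<sigma> X Y Z where h: "\<sigma> \<in> Sym" "(X,Y) \<in> B0" "V1 = image_mset (act_idx T \<sigma>) X + Z"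
    "V2 = image_mset (act_idx T \<sigma>) Y + Z" unfolding stepB_def by blast
  have "marg X Y" using h(2) unfolding B0_def by simp
  then have "marg (image_mset (act_idx T \<sigma>) X) (image_mset (act_idx T \<sigma>) Y)"
    using h(1) marg_act unfolding Sym_def by blast
  then show ?thesis using h(3,4) marg_add marg_refl by blast
qed

theorem main: "\<exists>B. finite B \<and> equivariant_markov_basis T (idx_set m T r) (ker_mu m Fs T r) B"
proof -
  define L where "L = ker_mu m Fs T r"
  define B where "B = (\<lambda>p. vec (fst p) - vec (snd p)) ` B0"
  define SB where "SB = {act_vec T \<sigma> b | \<sigma> b. \<sigma> \<in> Sym \<and> b \<in> B}"
  have JN_J: "JN \<subseteq> J" unfolding JN_def by auto
  have act_B: "act_vec T \<sigma> (vec X - vec Y) = vec (image_mset (act_idx T \<sigma>) X) - vec (image_mset (act_idx T \<sigma>) Y)" for \<sigma> X Y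
    unfolding act_vec_push push_vec ..
  have BL: "B \<subseteq> L"
  proof
    fix b assume "b \<in> B"
    then obtain X Y where "(X,Y) \<in> B0" "b = vec X - vec Y" unfolding B_def by auto
    then show "b \<in> L" unfolding L_def using ker_iff JN_J unfolding B0_def by auto
  qed
  have SBL: "SB \<subseteq> L"
  proof
    fix b assume "b \<in> SB"
    then obtain \<sigma> X Y where h: "\<sigma> \<in> Sym" "(X,Y) \<in> B0" "b = act_vec T \<sigma> (vec X - vec Y)"
      unfolding SB_def B_def by auto
    have XY: "marg X Y" "set_mset X \<subseteq> J" "set_mset Y \<subseteq> J" using h(2) JN_J unfolding B0_def by auto
    have "marg (image_mset (act_idx T \<sigma>) X) (image_mset (act_idx T \<sigma>) Y)"
      using marg_act XY(1) h(1) unfolding Sym_def by blast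
    moreover have "set_mset (image_mset (act_idx T \<sigma>) X) \<subseteq> J" "set_mset (image_mset (act_idx T \<sigma>) Y) \<subseteq> J"
      using XY(2,3) J_act[OF h(1)] by auto
    ultimately show "b \<in> L" unfolding h(3) act_B L_def using ker_iff by blast
  qed
  have conn_vec: "(\<lambda>x y. x \<in> fiber J L u \<and> y \<in> fiber J L u \<and> (x - y \<in> SB \<or> y - x \<in> SB))\<^sup>*\<^sup>* v w"
    if u: "u \<in> nonneg_vecs J" and v: "v \<in> fiber J L u" and w: "w \<in> fiber J L u" for u v w
  proof -
    define U where "U = ms u"
    define V where "V = ms v"
    define W where "W = ms w"
    have vn: "v \<in> nonneg_vecs J" and wn: "w \<in> nonneg_vecs J" using v w unfolding fiber_def by auto
    have U: "vec U = u" "set_mset U \<subseteq> J" using ms_vec[OF u] unfolding U_def by auto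
    have V: "vec V = v" "set_mset V \<subseteq> J" using ms_vec[OF vn] unfolding V_def by auto
    have W: "vec W = w" "set_mset W \<subseteq> J" using ms_vec[OF wn] unfolding W_def by auto
    have mUV: "marg U V" using v U V ker_iff unfolding fiber_def L_def by auto
    have mUW: "marg U W" using w U W ker_iff unfolding fiber_def L_def by auto
    have "marg V W" using marg_trans[OF marg_sym[OF mUV] mUW] .
    then have path: "stepB\<^sup>*\<^sup>* V W" using stepB_conn V(2) W(2) by blast
    define R where "R = (\<lambda>x y. x \<in> fiber J L u \<and> y \<in> fiber J L u \<and> (x - y \<in> SB \<or> y - x \<in> SB))"
    have inf: "vec V' \<in> fiber J L u" if "marg U V'" "set_mset V' \<subseteq> J" for V'
      unfolding fiber_def L_def using vec_fin[OF that(2)] ker_iff[OF U(2) that(2)] that(1) U(1) by auto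
    have "R\<^sup>*\<^sup>* (vec V) (vec V') \<and> marg U V'" if "stepB\<^sup>*\<^sup>* V V'" for V'
      using that
    proof (induction rule: rtranclp_induct)
      case base then show ?case using mUV by simp
    next
      case (step V1 V2)
      then have IH: "R\<^sup>*\<^sup>* (vec V) (vec V1)" "marg U V1" by auto
      have m2: "marg U V2" using marg_trans[OF IH(2) stepB_marg[OF step.hyps(2)]] .
      obtain \<sigma> X Y Z where h: "\<sigma> \<in> Sym" "(X,Y) \<in> B0" "V1 = image_mset (act_idx T \<sigma>) X + Z"
        "V2 = image_mset (act_idx T \<sigma>) Y + Z" "set_mset V1 \<subseteq> J" "set_mset V2 \<subseteq> J"
        using step.hyps(2) unfolding stepB_def by blast
      have "vec V1 - vec V2 = vec (image_mset (act_idx T \<sigma>) X) - vec (image_mset (act_idx T \<sigma>) Y)"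
        unfolding h(3,4) vec_def by (simp add: fun_eq_iff)
      also have "\<dots> = act_vec T \<sigma> (vec X - vec Y)" using act_B by simp
      finally have "vec V1 - vec V2 \<in> SB" unfolding SB_def B_def using h(1,2) by force
      then have "R (vec V1) (vec V2)" unfolding R_def using inf IH(2) m2 h(5,6) by blast
      then show ?case using IH(1) m2 by (meson rtranclp.rtrancl_into_rtrancl)
    qed
    then show ?thesis using path V(1) W(1) unfolding R_def by blast
  qed
  have "finite B" unfolding B_def using finite_B0 by simp
  moreover have "equivariant_markov_basis T (idx_set m T r) (ker_mu m Fs T r) B"
    unfolding equivariant_markov_basis_def markov_basis_def
    using BL SBL conn_vec unfolding L_def SB_def J_def by blast
  ultimately show ?thesis by blast
qed

end

theorem corollary5p8:
  fixes m :: nat and Fs :: "nat set list" and T :: "nat set" and r :: "nat \<Rightarrow> nat"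
  assumes facets_sub: "\<forall>k < length Fs. Fs ! k \<subseteq> {1..m}"
    and facets_antichain: "\<forall>k < length Fs. \<forall>l < length Fs. k \<noteq> l \<longrightarrow> \<not> (Fs ! k \<subseteq> Fs ! l)"
    and T_sub: "T \<subseteq> {1..m}"
    and T_indep: "\<forall>k < length Fs. card (T \<inter> Fs ! k) \<le> 1"
    and r_pos: "\<forall>j \<in> {1..m} - T. 1 \<le> r j"
  shows "\<exists>B. finite B \<and> equivariant_markov_basis T (idx_set m T r) (ker_mu m Fs T r) B"
proof -
  interpret hs m Fs T r
    using facets_sub T_sub T_indep by unfold_locales
  show ?thesis by (rule main)
qed

end
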